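(* Let $0<\delta<1/3$, $d_s\ge\delta/2$, $d_x\ge0$. Define $\mathcal D_1=\{0\le d_x\le2\delta,\ d_s\ge d_x/2+\delta/2\}$; $\mathcal D_2=\{2\delta\le d_x\le1/2+\delta/2,\ d_s\ge d_x-\delta/2\}$; $\mathcal D_3=\{d_x\ge d_s+\delta/2,\ \delta/2\le d_s\le1/2\}$; $\mathcal D_4=\{2d_s-\delta\le d_x\le d_s+\delta/2,\ \delta/2\le d_s\le3\delta/2\}$; $\mathcal D_5=\{d_x\ge1/2+\delta/2,\ d_s\ge1/2\}$. Then, with $x,y\in\{0,1,e\}$, $z\in\{0,1\}$: (i) if $(d_s,d_x)\in\mathcal D_1$, $R(d_s,d_x)=h(\delta)+(1-\delta)\log2-h(d_x)-d_x\log2$, attained by $X-Y^\star-Z^\star$ Markov with $P_{Y^\star}(0)=P_{Y^\star}(1)=\frac{1-\delta-d_x}{2-3d_x}$, $P_{Y^\star}(e)=\frac{2\delta-d_x}{2-3d_x}$, $P_{X|Y^\star}(x|y)=1-d_x$ if $x=y$ and $d_x/2$ otherwise, $P_{Z^\star|Y^\star}(z|y)=1$ if $z=y$, $P_{Z^\star|Y^\star}(0|e)=\theta$, $P_{Z^\star|Y^\star}(1|e)=1-\theta$, and $0$ otherwise, for any $\theta\in[0,1]$; (ii) if $(d_s,d_x)\in\mathcal D_2$, $R(d_s,d_x)=(1-\delta)[\log2-h((d_x-\delta)/(1-\delta))]$, attained by $X-Y^\star-Z^\star$ with $P_{Y^\star}(0)=P_{Y^\star}(1)=1/2$, $P_{Y^\star}(e)=0$,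 $P_{X|Y^\star}(x|y)=1-d_x$ if $x=y\ne e$, $d_x-\delta$ if $x\ne y$ with $x,y\ne e$, $\delta$ if $x=e,y\ne e$, and $Z^\star=Y^\star$; (iii) if $(d_s,d_x)\in\mathcal D_3$, $R(d_s,d_x)=(1-\delta)[\log2-h((d_s-\delta/2)/(1-\delta))]$, attained by $X-Z^\star-Y^\star$ with $P_{Z^\star}$ uniform on $\{0,1\}$, $P_{X|Z^\star}(x|z)=1-d_s-\delta/2$ if $x=z$, $d_s-\delta/2$ if $x\ne z,x\ne e$, $\delta$ if $x=e$, and $Y^\star=Z^\star$; (iv) if $(d_s,d_x)\in\mathcal D_4$, $R(d_s,d_x)=h(\delta)+(1-\delta)\log2-H(d_s-\delta/2,\ d_x-d_s+\delta/2,\ 1-d_x)$, attained by $P_{Z^\star Y^\star}(z,y)=\frac{\delta+d_x-1}{\delta+4d_x-2d_s-2}$ if $z=y$, $\frac{d_x-d_s-\delta/2}{\delta+4d_x-2d_s-2}$ if $y=e$, $0$ otherwise, together with $P_{X|Z^\star Y^\star}(x|z,y)=1-d_x$ for $(x|z,y)\in\{(0|0,0),(1|1,1),(e|0,e),(e|1,e)\}$; $d_s-\delta/2$ for $(x|z,y)\in\{(1|0,0),(0|1,1),(1|0,e),(0|1,e)\}$; $d_x-d_s+\delta/2$ for $(x|z,y)\in\{(e|0,0),(e|1,1),(0|0,e),(1|1,e)\}$; $0$ otherwise; (v) if $(d_s,d_x)\in\mathcal D_5$, $R(d_s,d_x)=0$. Here "attained by" means the displayed joint distribution of $(X,Z^\star,Y^\star)$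 has $X$-marginal $P_X$ and its conditional $P_{Z^\star Y^\star|X}$ is a minimizer in the definition of $R(d_s,d_x)$.
   Context: Erased fair coin flips: $S$ is uniform on $\{0,1\}$, and $X\in\{0,1,e\}$ is the output of a binary erasure channel with erasure probability $\delta$ and input $S$ (so $X=S$ w.p. $1-\delta$, $X=e$ w.p. $\delta$). Reconstructions $Z\in\{0,1\}$ for $S$ and $Y\in\{0,1,e\}$ for $X$, with Hamming distortions $\mathsf d_s(s,z)=1\{s\ne z\}$, $\mathsf d_x(x,y)=1\{x\ne y\}$. Let $\bar{\mathsf d}_s(x,z)=\mathbb E[\mathsf d_s(S,z)\mid X=x]$. $R(d_s,d_x)=\min_{P_{ZY|X}}I(X;Z,Y)$ subject to $\mathbb E[\bar{\mathsf d}_s(X,Z)]\le d_s$ and $\mathbb E[\mathsf d_x(X,Y)]\le d_x$. $h(p)=-p\log p-(1-p)\log(1-p)$ is the binary entropy and $H(p_1,p_2,p_3)=-\sum_ip_i\log p_i$, with $0\log0=0$ and the same logarithm base as in the mutual information. *)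

theory Defs
  imports Complex_Main
begin

datatype zsym = Z0 | Z1

datatype xsym = X0 | X1 | Xe

lemma UNIV_zsym: "(UNIV :: zsym set) = {Z0, Z1}"
  using zsym.exhaust by auto

lemma UNIV_xsym: "(UNIV :: xsym set) = {X0, X1, Xe}"
  using xsym.exhaust by auto

instance zsym :: finite
  by standard (simp add: UNIV_zsym)

instance xsym :: finite
  by standard (simp add: UNIV_xsym)

fun emb :: "zsym \<Rightarrow> xsym" where
  "emb Z0 = X0" | "emb Z1 = X1"

definition PS :: "zsym \<Rightarrow> real" where
  "PS s = 1/2"

definition BEC :: "real \<Rightarrow> zsym \<Rightarrow> xsym \<Rightarrow> real" where
  "BEC \<delta> s x = (if x = Xe then \<delta> else if x = emb s then 1 - \<delta> else 0)"

definition PX :: "real \<Rightarrow> xsym \<Rightarrow> real" where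
  "PX \<delta> x = (\<Sum>s\<in>UNIV. PS s * BEC \<delta> s x)"

definition post :: "real \<Rightarrow> xsym \<Rightarrow> zsym \<Rightarrow> real" where
  "post \<delta> x s = PS s * BEC \<delta> s x / PX \<delta> x"

definition d_s :: "zsym \<Rightarrow> zsym \<Rightarrow> real" where
  "d_s s z = (if s = z then 0 else 1)"

definition d_x :: "xsym \<Rightarrow> xsym \<Rightarrow> real" where
  "d_x x y = (if x = y then 0 else 1)"

definition dsbar :: "real \<Rightarrow> xsym \<Rightarrow> zsym \<Rightarrow> real" where
  "dsbar \<delta> x z = (\<Sum>s\<in>UNIV. post \<delta> x s * d_s s z)"

text \<open>A test channel W x z y = P_{ZY|X}(z,y|x).\<close>
definition cond_pmf :: "(xsym \<Rightarrow> zsym \<Rightarrow> xsym \<Rightarrow> real) \<Rightarrow> bool" where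
  "cond_pmf W \<longleftrightarrow> (\<forall>x z y. 0 \<le> W x z y) \<and> (\<forall>x. (\<Sum>z\<in>UNIV. \<Sum>y\<in>UNIV. W x z y) = 1)"

definition mutual_info :: "real \<Rightarrow> real \<Rightarrow> (xsym \<Rightarrow> zsym \<Rightarrow> xsym \<Rightarrow> real) \<Rightarrow> real" where
  "mutual_info b \<delta> W =
     (\<Sum>x\<in>UNIV. \<Sum>z\<in>UNIV. \<Sum>y\<in>UNIV.
        (let p = PX \<delta> x * W x z y;
             q = (\<Sum>x'\<in>UNIV. PX \<delta> x' * W x' z y)
         in if p = 0 then 0 else p * log b (W x z y / q)))"

definition exp_ds :: "real \<Rightarrow> (xsym \<Rightarrow> zsym \<Rightarrow> xsym \<Rightarrow> real) \<Rightarrow> real" where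
  "exp_ds \<delta> W = (\<Sum>x\<in>UNIV. \<Sum>z\<in>UNIV. \<Sum>y\<in>UNIV. PX \<delta> x * W x z y * dsbar \<delta> x z)"

definition exp_dx :: "real \<Rightarrow> (xsym \<Rightarrow> zsym \<Rightarrow> xsym \<Rightarrow> real) \<Rightarrow> real" where
  "exp_dx \<delta> W = (\<Sum>x\<in>UNIV. \<Sum>z\<in>UNIV. \<Sum>y\<in>UNIV. PX \<delta> x * W x z y * d_x x y)"

definition feasible :: "real \<Rightarrow> real \<Rightarrow> real \<Rightarrow> (xsym \<Rightarrow> zsym \<Rightarrow> xsym \<Rightarrow> real) \<Rightarrow> bool" where
  "feasible \<delta> ds dx W \<longleftrightarrow> cond_pmf W \<and> exp_ds \<delta> W \<le> ds \<and> exp_dx \<delta> W \<le> dx"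

definition RD :: "real \<Rightarrow> real \<Rightarrow> real \<Rightarrow> real \<Rightarrow> real" where
  "RD b \<delta> ds dx = Inf {mutual_info b \<delta> W | W. feasible \<delta> ds dx W}"

definition attains :: "real \<Rightarrow> real \<Rightarrow> real \<Rightarrow> real \<Rightarrow> (xsym \<Rightarrow> zsym \<Rightarrow> xsym \<Rightarrow> real) \<Rightarrow> bool" where
  "attains b \<delta> ds dx J \<longleftrightarrow>
     (\<forall>x. (\<Sum>z\<in>UNIV. \<Sum>y\<in>UNIV. J x z y) = PX \<delta> x) \<and>
     feasible \<delta> ds dx (\<lambda>x z y. J x z y / PX \<delta> x) \<and>
     mutual_info b \<delta> (\<lambda>x z y. J x z y / PX \<delta> x) = RD b \<delta> ds dx"

definition plogp :: "real \<Rightarrow> real \<Rightarrow> real" where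
  "plogp b p = (if p = 0 then 0 else p * log b p)"

definition hb :: "real \<Rightarrow> real \<Rightarrow> real" where
  "hb b p = - plogp b p - plogp b (1 - p)"

definition H3 :: "real \<Rightarrow> real \<Rightarrow> real \<Rightarrow> real \<Rightarrow> real" where
  "H3 b p1 p2 p3 = - plogp b p1 - plogp b p2 - plogp b p3"

definition PY1 :: "real \<Rightarrow> real \<Rightarrow> xsym \<Rightarrow> real" where
  "PY1 \<delta> dx y = (if y = Xe then (2*\<delta> - dx) / (2 - 3*dx) else (1 - \<delta> - dx) / (2 - 3*dx))"
definition PXgY1 :: "real \<Rightarrow> xsym \<Rightarrow> xsym \<Rightarrow> real" where
  "PXgY1 dx x y = (if x = y then 1 - dx else dx / 2)"
definition PZgY1 :: "real \<Rightarrow> zsym \<Rightarrow> xsym \<Rightarrow> real" where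
  "PZgY1 \<theta> z y = (if y = emb z then 1
                   else if y = Xe \<and> z = Z0 then \<theta>
                   else if y = Xe \<and> z = Z1 then 1 - \<theta> else 0)"
definition J1 :: "real \<Rightarrow> real \<Rightarrow> real \<Rightarrow> xsym \<Rightarrow> zsym \<Rightarrow> xsym \<Rightarrow> real" where
  "J1 \<delta> dx \<theta> x z y = PY1 \<delta> dx y * PXgY1 dx x y * PZgY1 \<theta> z y"

definition PY2 :: "xsym \<Rightarrow> real" where
  "PY2 y = (if y = Xe then 0 else 1/2)"
definition PXgY2 :: "real \<Rightarrow> real \<Rightarrow> xsym \<Rightarrow> xsym \<Rightarrow> real" where
  "PXgY2 \<delta> dx x y = (if y = Xe then 0
                      else if x = y then 1 - dx
                      else if x = Xe then \<delta>
                      else dx - \<delta>)"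
definition J2 :: "real \<Rightarrow> real \<Rightarrow> xsym \<Rightarrow> zsym \<Rightarrow> xsym \<Rightarrow> real" where
  "J2 \<delta> dx x z y = PY2 y * PXgY2 \<delta> dx x y * (if y = emb z then 1 else 0)"

definition PXgZ3 :: "real \<Rightarrow> real \<Rightarrow> xsym \<Rightarrow> zsym \<Rightarrow> real" where
  "PXgZ3 \<delta> ds x z = (if x = emb z then 1 - ds - \<delta>/2
                      else if x = Xe then \<delta>
                      else ds - \<delta>/2)"
definition J3 :: "real \<Rightarrow> real \<Rightarrow> xsym \<Rightarrow> zsym \<Rightarrow> xsym \<Rightarrow> real" where
  "J3 \<delta> ds x z y = (1/2) * PXgZ3 \<delta> ds x z * (if y = emb z then 1 else 0)"

definition PZY4 :: "real \<Rightarrow> real \<Rightarrow> real \<Rightarrow> zsym \<Rightarrow> xsym \<Rightarrow> real" where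
  "PZY4 \<delta> ds dx z y =
     (if y = emb z then (\<delta> + dx - 1) / (\<delta> + 4*dx - 2*ds - 2)
      else if y = Xe then (dx - ds - \<delta>/2) / (\<delta> + 4*dx - 2*ds - 2)
      else 0)"
definition PXgZY4 :: "real \<Rightarrow> real \<Rightarrow> real \<Rightarrow> xsym \<Rightarrow> zsym \<Rightarrow> xsym \<Rightarrow> real" where
  "PXgZY4 \<delta> ds dx x z y =
     (if (x, z, y) \<in> {(X0, Z0, X0), (X1, Z1, X1), (Xe, Z0, Xe), (Xe, Z1, Xe)} then 1 - dx
      else if (x, z, y) \<in> {(X1, Z0, X0), (X0, Z1, X1), (X1, Z0, Xe), (X0, Z1, Xe)} then ds - \<delta>/2
      else if (x, z, y) \<in> {(Xe, Z0, X0), (Xe, Z1, X1), (X0, Z0, Xe), (X1, Z1, Xe)} then dx - ds + \<delta>/2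
      else 0)"
definition J4 :: "real \<Rightarrow> real \<Rightarrow> real \<Rightarrow> xsym \<Rightarrow> zsym \<Rightarrow> xsym \<Rightarrow> real" where
  "J4 \<delta> ds dx x z y = PZY4 \<delta> ds dx z y * PXgZY4 \<delta> ds dx x z y"

definition D1 :: "real \<Rightarrow> real \<Rightarrow> real \<Rightarrow> bool" where
  "D1 \<delta> ds dx \<longleftrightarrow> 0 \<le> dx \<and> dx \<le> 2*\<delta> \<and> ds \<ge> dx/2 + \<delta>/2"
definition D2 :: "real \<Rightarrow> real \<Rightarrow> real \<Rightarrow> bool" where
  "D2 \<delta> ds dx \<longleftrightarrow> 2*\<delta> \<le> dx \<and> dx \<le> 1/2 + \<delta>/2 \<and> ds \<ge> dx - \<delta>/2"
definition D3 :: "real \<Rightarrow> real \<Rightarrow> real \<Rightarrow> bool" where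
  "D3 \<delta> ds dx \<longleftrightarrow> dx \<ge> ds + \<delta>/2 \<and> \<delta>/2 \<le> ds \<and> ds \<le> 1/2"
definition D4 :: "real \<Rightarrow> real \<Rightarrow> real \<Rightarrow> bool" where
  "D4 \<delta> ds dx \<longleftrightarrow> 2*ds - \<delta> \<le> dx \<and> dx \<le> ds + \<delta>/2 \<and> \<delta>/2 \<le> ds \<and> ds \<le> 3*\<delta>/2"
definition D5 :: "real \<Rightarrow> real \<Rightarrow> real \<Rightarrow> bool" where
  "D5 \<delta> ds dx \<longleftrightarrow> dx \<ge> 1/2 + \<delta>/2 \<and> ds \<ge> 1/2"

end

theory Submission
  imports Defs
begin


lemma sum_x: "(\<Sum>x\<in>UNIV. f x) = f X0 + f X1 + f Xe"
  by (simp add: UNIV_xsym add.assoc)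
lemma sum_z: "(\<Sum>z\<in>UNIV. f z) = f Z0 + f Z1"
  by (simp add: UNIV_zsym)

lemma PX_vals: "PX \<delta> X0 = (1-\<delta>)/2" "PX \<delta> X1 = (1-\<delta>)/2" "PX \<delta> Xe = \<delta>"
  unfolding PX_def sum_z by (simp_all add: PS_def BEC_def)

lemma dsbar_vals:
  assumes "0 < \<delta>" "\<delta> < 1"
  shows "dsbar \<delta> X0 Z0 = 0" "dsbar \<delta> X0 Z1 = 1" "dsbar \<delta> X1 Z0 = 1" "dsbar \<delta> X1 Z1 = 0"
    "dsbar \<delta> Xe z = 1/2"
  using assms by (cases z; simp add: dsbar_def post_def sum_z PX_vals PS_def BEC_def d_s_def)+

lemma PX_pos: "0 < \<delta> \<Longrightarrow> \<delta> < 1 \<Longrightarrow> PX \<delta> x > 0"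
  by (cases x) (auto simp: PX_vals)

lemma PX_sum: "(\<Sum>x\<in>UNIV. PX \<delta> x) = 1"
  by (simp add: sum_x PX_vals)

definition HX :: "real \<Rightarrow> real \<Rightarrow> real" where
  "HX b \<delta> = hb b \<delta> + (1-\<delta>) * log b 2"

lemma HX_alt:
  assumes "b > 1" "0 < \<delta>" "\<delta> < 1"
  shows "(\<Sum>x\<in>UNIV. PX \<delta> x * log b (PX \<delta> x)) = - HX b \<delta>"
proof -
  have e: "log b ((1-\<delta>)/2) = log b (1-\<delta>) - log b 2"
    using assms by (simp add: log_divide)
  show ?thesis using assms unfolding sum_x PX_vals e
    by (simp add: sum_x PX_vals HX_def hb_def plogp_def algebra_simps)
qed

lemma sum3_swap: fixes f :: "xsym \<Rightarrow> zsym \<Rightarrow> xsym \<Rightarrow> 'a::comm_monoid_add" shows "(\<Sum>x\<in>UNIV. \<Sum>z\<in>UNIV. \<Sum>y\<in>UNIV. f x z y) = (\<Sum>z\<in>UNIV. \<Sum>y\<in>UNIV. \<Sum>x\<in>UNIV. f x z y)"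
  by (simp add: sum_x sum_z algebra_simps)

lemma plog_ineq:
  assumes "b > 1" "p > 0" "r > 0"
  shows "p * log b (p / r) \<ge> (p - r) / ln b"
proof -
  have "ln (r/p) \<le> r/p - 1" using assms by (intro ln_le_minus_one) simp
  then have "p * ln (r/p) \<le> r - p" using assms by (simp add: field_simps)
  moreover have "ln (p/r) = - ln (r/p)" using assms by (simp add: ln_div)
  ultimately have "p * ln (p/r) \<ge> p - r" by simp
  moreover have "ln b > 0" using assms by simp
  ultimately show ?thesis by (simp add: log_def divide_right_mono)
qed

lemma dual:
  assumes b: "b > 1" and d0: "0 < \<delta>" and d1: "\<delta> < 1" and W: "cond_pmf W"
    and wb: "wb > 0" and we: "we > 0" and a0: "0 < a" and a1: "a \<le> 1" and B0: "0 < \<beta>" and B1: "\<beta> \<le> 1"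
    and C1: "wb*(1 + a^2*\<beta>) + we*a*\<beta> \<le> 1" and C3: "wb*\<beta>*(1+a^2) + we*a \<le> 1"
  shows "mutual_info b \<delta> W \<ge> HX b \<delta> + (1-\<delta>)*log b wb + \<delta>*log b we + 2*exp_ds \<delta> W*log b a + exp_dx \<delta> W*log b \<beta>"
proof -
  define wf where "wf x = (if x = Xe then we else wb)" for x
  define Af where "Af x z = (if x = Xe then a else if x = emb z then 1 else a^2)" for x z
  define Bf where "Bf x y = (if x = y then 1 else \<beta>)" for x :: xsym and y
  define Q where "Q z y = (\<Sum>x'\<in>UNIV. PX \<delta> x' * W x' z y)" for z y
  define g where "g x z y = wf x * Af x z * Bf x y" for x z y
  define r where "r x z y = Q z y * g x z y" for x z y
  define p where "p x z y = PX \<delta> x * W x z y" for x z y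
  define c where "c x z y = log b (wf x) - log b (PX \<delta> x) + 2 * dsbar \<delta> x z * log b a + d_x x y * log b \<beta>" for x z y
  have Wnn: "\<And>x z y. W x z y \<ge> 0" using W by (simp add: cond_pmf_def)
  have Wsum: "\<And>x. (\<Sum>z\<in>UNIV. \<Sum>y\<in>UNIV. W x z y) = 1" using W by (simp add: cond_pmf_def)
  have PXp: "\<And>x. PX \<delta> x > 0" using PX_pos d0 d1 by blast
  have pos_wf: "wf x > 0" for x using wb we by (simp add: wf_def)
  have pos_Af: "Af x z > 0" for x z using a0 by (simp add: Af_def)
  have pos_Bf: "Bf x y > 0" for x y using B0 by (simp add: Bf_def)
  have pos_g: "g x z y > 0" for x z y using pos_wf pos_Af pos_Bf by (simp add: g_def)
  have logA: "log b (Af x z) = 2 * dsbar \<delta> x z * log b a" for x z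
    using a0 by (cases x; cases z) (simp_all add: Af_def dsbar_vals[OF d0 d1] log_nat_power)
  have logB: "log b (Bf x y) = d_x x y * log b \<beta>" for x y by (simp add: Bf_def d_x_def)
  have C2: "wb*(\<beta> + a^2) + we*a*\<beta> \<le> 1"
  proof -
    have "a^2 \<le> 1" using a0 a1 by (simp add: power_le_one)
    then have "(1-\<beta>)*(1-a^2) \<ge> 0" using B1 by simp
    then have "\<beta> + a^2 \<le> 1 + a^2*\<beta>" by (simp add: algebra_simps)
    then have "wb*(\<beta> + a^2) \<le> wb*(1+a^2*\<beta>)" using wb by simp
    then show ?thesis using C1 by linarith
  qed
  have cons: "(\<Sum>x\<in>UNIV. g x z y) \<le> 1" for z y
    using C1 C2 C3 by (cases z; cases y) (simp_all add: sum_x g_def wf_def Af_def Bf_def algebra_simps)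
  have Qge: "Q z y \<ge> p x z y" for x z y
    unfolding Q_def p_def
    by (rule member_le_sum[where f="\<lambda>x'. PX \<delta> x' * W x' z y"]) (auto intro: mult_nonneg_nonneg less_imp_le PXp Wnn)
  have Qnn: "Q z y \<ge> 0" for z y unfolding Q_def by (intro sum_nonneg mult_nonneg_nonneg less_imp_le PXp Wnn)
  have pnn: "p x z y \<ge> 0" for x z y unfolding p_def by (intro mult_nonneg_nonneg less_imp_le PXp Wnn)
  have pt: "(let pp = PX \<delta> x * W x z y; q = (\<Sum>x'\<in>UNIV. PX \<delta> x' * W x' z y)
         in if pp = 0 then 0 else pp * log b (W x z y / q))
       \<ge> (if p x z y = 0 then 0 else (p x z y - r x z y)/ln b) + p x z y * c x z y" for x z y
  proof (cases "p x z y = 0")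
    case True
    then show ?thesis by (simp add: p_def[symmetric] Let_def)
  next
    case False
    then have pp: "p x z y > 0" using pnn[of x z y] by simp
    have Wp: "W x z y > 0" using pp PXp[of x] Wnn[of x z y] unfolding p_def
      by (simp add: zero_less_mult_iff)
    have Qp: "Q z y > 0" using Qge[of x z y] pp by simp
    have rp: "r x z y > 0" using Qp pos_g unfolding r_def by simp
    have eq: "W x z y / Q z y = (p x z y / r x z y) * (wf x * Af x z * Bf x y / PX \<delta> x)"
      using PXp[of x] Qp pos_wf[of x] pos_Af[of x z] pos_Bf[of x y] unfolding p_def r_def g_def by (simp add: field_simps)
    have "log b (W x z y / Q z y) = log b (p x z y / r x z y) + log b (wf x) + log b (Af x z) + log b (Bf x y) - log b (PX \<delta> x)"
      unfolding eq using pp rp pos_wf[of x] pos_Af[of x z] pos_Bf[of x y] PXp[of x] b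
      by (simp add: log_mult log_divide)
    then have h: "log b (W x z y / Q z y) = log b (p x z y / r x z y) + c x z y"
      unfolding c_def logA logB by (simp add: algebra_simps)
    then have "p x z y * log b (W x z y / Q z y) = p x z y * log b (p x z y / r x z y) + p x z y * c x z y"
      by (simp add: distrib_left)
    moreover have "p x z y * log b (p x z y / r x z y) \<ge> (p x z y - r x z y)/ln b"
      using plog_ineq[OF b pp rp] .
    moreover have "Q z y = (\<Sum>x'\<in>UNIV. p x' z y)" by (simp add: Q_def p_def)
    ultimately show ?thesis using False by (simp add: Let_def p_def[symmetric])
  qed
  have M0: "mutual_info b \<delta> W \<ge> (\<Sum>x\<in>UNIV. \<Sum>z\<in>UNIV. \<Sum>y\<in>UNIV. (if p x z y = 0 then 0 else (p x z y - r x z y)/ln b) + p x z y * c x z y)"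
    unfolding mutual_info_def by (intro sum_mono pt)
  have M1: "(\<Sum>x\<in>UNIV. \<Sum>z\<in>UNIV. \<Sum>y\<in>UNIV. (if p x z y = 0 then 0 else (p x z y - r x z y)/ln b) + p x z y * c x z y) = (\<Sum>x\<in>UNIV. \<Sum>z\<in>UNIV. \<Sum>y\<in>UNIV. (if p x z y = 0 then 0 else (p x z y - r x z y)/ln b))
      + (\<Sum>x\<in>UNIV. \<Sum>z\<in>UNIV. \<Sum>y\<in>UNIV. p x z y * c x z y)"
    by (simp add: sum.distrib)
  have M: "mutual_info b \<delta> W \<ge> (\<Sum>x\<in>UNIV. \<Sum>z\<in>UNIV. \<Sum>y\<in>UNIV. (if p x z y = 0 then 0 else (p x z y - r x z y)/ln b))
      + (\<Sum>x\<in>UNIV. \<Sum>z\<in>UNIV. \<Sum>y\<in>UNIV. p x z y * c x z y)" using M0 M1 by linarith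
  have lnb: "ln b > 0" using b by simp
  have S1: "(\<Sum>x\<in>UNIV. \<Sum>z\<in>UNIV. \<Sum>y\<in>UNIV. (if p x z y = 0 then 0 else (p x z y - r x z y)/ln b))
     \<ge> (\<Sum>x\<in>UNIV. \<Sum>z\<in>UNIV. \<Sum>y\<in>UNIV. (p x z y - r x z y)/ln b)"
  proof (intro sum_mono)
    fix x z y
    have "r x z y \<ge> 0" using Qnn[of z y] pos_g[of x z y] unfolding r_def by simp
    then show "(p x z y - r x z y)/ln b \<le> (if p x z y = 0 then 0 else (p x z y - r x z y)/ln b)"
      using lnb by (simp add: divide_nonpos_pos)
  qed
  have sp: "(\<Sum>x\<in>UNIV. \<Sum>z\<in>UNIV. \<Sum>y\<in>UNIV. p x z y) = 1"
  proof -
    have "(\<Sum>x\<in>UNIV. \<Sum>z\<in>UNIV. \<Sum>y\<in>UNIV. p x z y) = (\<Sum>x\<in>UNIV. PX \<delta> x * (\<Sum>z\<in>UNIV. \<Sum>y\<in>UNIV. W x z y))"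
      unfolding p_def by (simp add: sum_distrib_left)
    also have "\<dots> = 1" using Wsum PX_sum by simp
    finally show ?thesis .
  qed
  have sQ: "(\<Sum>z\<in>UNIV. \<Sum>y\<in>UNIV. Q z y) = 1"
  proof -
    have "(\<Sum>z\<in>UNIV. \<Sum>y\<in>UNIV. Q z y) = (\<Sum>x\<in>UNIV. \<Sum>z\<in>UNIV. \<Sum>y\<in>UNIV. p x z y)"
      unfolding Q_def p_def by (rule sum3_swap[symmetric])
    then show ?thesis using sp by simp
  qed
  have sr: "(\<Sum>x\<in>UNIV. \<Sum>z\<in>UNIV. \<Sum>y\<in>UNIV. r x z y) \<le> 1"
  proof -
    have "(\<Sum>x\<in>UNIV. \<Sum>z\<in>UNIV. \<Sum>y\<in>UNIV. r x z y) = (\<Sum>z\<in>UNIV. \<Sum>y\<in>UNIV. \<Sum>x\<in>UNIV. r x z y)"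
      by (rule sum3_swap)
    also have "\<dots> = (\<Sum>z\<in>UNIV. \<Sum>y\<in>UNIV. Q z y * (\<Sum>x\<in>UNIV. g x z y))"
      unfolding r_def by (simp add: sum_distrib_left)
    also have "\<dots> \<le> (\<Sum>z\<in>UNIV. \<Sum>y\<in>UNIV. Q z y)"
      by (intro sum_mono mult_right_le_one_le Qnn cons sum_nonneg less_imp_le pos_g)
    finally show ?thesis using sQ by simp
  qed
  have S1': "(\<Sum>x\<in>UNIV. \<Sum>z\<in>UNIV. \<Sum>y\<in>UNIV. (p x z y - r x z y)/ln b) \<ge> 0"
  proof -
    have "(\<Sum>x\<in>UNIV. \<Sum>z\<in>UNIV. \<Sum>y\<in>UNIV. (p x z y - r x z y)/ln b)
       = ((\<Sum>x\<in>UNIV. \<Sum>z\<in>UNIV. \<Sum>y\<in>UNIV. p x z y) - (\<Sum>x\<in>UNIV. \<Sum>z\<in>UNIV. \<Sum>y\<in>UNIV. r x z y))/ln b"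
      by (simp add: sum_divide_distrib[symmetric] sum_subtractf)
    then show ?thesis using sp sr lnb by simp
  qed
  have S2: "(\<Sum>x\<in>UNIV. \<Sum>z\<in>UNIV. \<Sum>y\<in>UNIV. p x z y * c x z y)
     = (\<Sum>x\<in>UNIV. PX \<delta> x * (log b (wf x) - log b (PX \<delta> x))) + 2 * exp_ds \<delta> W * log b a + exp_dx \<delta> W * log b \<beta>"
  proof -
    have "(\<Sum>x\<in>UNIV. \<Sum>z\<in>UNIV. \<Sum>y\<in>UNIV. p x z y * c x z y)
      = (\<Sum>x\<in>UNIV. \<Sum>z\<in>UNIV. \<Sum>y\<in>UNIV. PX \<delta> x * (log b (wf x) - log b (PX \<delta> x)) * W x z y)
        + 2 * log b a * (\<Sum>x\<in>UNIV. \<Sum>z\<in>UNIV. \<Sum>y\<in>UNIV. PX \<delta> x * W x z y * dsbar \<delta> x z)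
        + log b \<beta> * (\<Sum>x\<in>UNIV. \<Sum>z\<in>UNIV. \<Sum>y\<in>UNIV. PX \<delta> x * W x z y * d_x x y)"
      unfolding p_def c_def sum_x sum_z by (simp add: algebra_simps)
    also have "(\<Sum>x\<in>UNIV. \<Sum>z\<in>UNIV. \<Sum>y\<in>UNIV. PX \<delta> x * (log b (wf x) - log b (PX \<delta> x)) * W x z y)
       = (\<Sum>x\<in>UNIV. PX \<delta> x * (log b (wf x) - log b (PX \<delta> x)) * (\<Sum>z\<in>UNIV. \<Sum>y\<in>UNIV. W x z y))"
      by (simp add: sum_distrib_left)
    finally show ?thesis using Wsum by (simp add: exp_ds_def exp_dx_def)
  qed
  have S3: "(\<Sum>x\<in>UNIV. PX \<delta> x * (log b (wf x) - log b (PX \<delta> x))) = (1-\<delta>)*log b wb + \<delta>*log b we + HX b \<delta>"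
  proof -
    have "(\<Sum>x\<in>UNIV. PX \<delta> x * (log b (wf x) - log b (PX \<delta> x))) = (\<Sum>x\<in>UNIV. PX \<delta> x * log b (wf x)) - (\<Sum>x\<in>UNIV. PX \<delta> x * log b (PX \<delta> x))"
      by (simp add: right_diff_distrib sum_subtractf)
    also have "(\<Sum>x\<in>UNIV. PX \<delta> x * log b (wf x)) = (1-\<delta>)*log b wb + \<delta>*log b we"
      by (simp add: sum_x PX_vals wf_def algebra_simps)
    finally show ?thesis using HX_alt[OF b d0 d1] by simp
  qed
  show ?thesis using M S1 S1' S2 S3 by linarith
qed

lemma dualF:
  assumes b: "b > 1" and d0: "0 < \<delta>" and d1: "\<delta> < 1" and F: "feasible \<delta> ds dx W"
    and wb: "wb > 0" and we: "we > 0" and a0: "0 < a" and a1: "a \<le> 1" and B0: "0 < \<beta>" and B1: "\<beta> \<le> 1"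
    and C1: "wb*(1 + a^2*\<beta>) + we*a*\<beta> \<le> 1" and C3: "wb*\<beta>*(1+a^2) + we*a \<le> 1"
  shows "mutual_info b \<delta> W \<ge> HX b \<delta> + (1-\<delta>)*log b wb + \<delta>*log b we + 2*ds*log b a + dx*log b \<beta>"
proof -
  have W: "cond_pmf W" and es: "exp_ds \<delta> W \<le> ds" and ex: "exp_dx \<delta> W \<le> dx"
    using F by (auto simp: feasible_def)
  have la: "log b a \<le> 0" using b a0 a1 by simp
  have lB: "log b \<beta> \<le> 0" using b B0 B1 by simp
  have "2*ds*log b a \<le> 2*exp_ds \<delta> W*log b a" using es la by (simp add: mult_right_mono_neg)
  moreover have "dx*log b \<beta> \<le> exp_dx \<delta> W*log b \<beta>" using ex lB by (simp add: mult_right_mono_neg)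
  moreover note dual[OF b d0 d1 W wb we a0 a1 B0 B1 C1 C3]
  ultimately show ?thesis by linarith
qed

lemma eps_bound:
  fixes M T c :: real
  assumes c: "c > 0" and h: "\<And>e. 0 < e \<Longrightarrow> e \<le> 1 \<Longrightarrow> M \<ge> T - c*e"
  shows "M \<ge> T"
proof (rule ccontr)
  assume "\<not> M \<ge> T"
  then have lt: "M < T" by simp
  define e where "e = min 1 ((T-M)/(2*c))"
  have e0: "0 < e" using lt c by (simp add: e_def)
  have e1: "e \<le> 1" by (simp add: e_def)
  have "e \<le> (T-M)/(2*c)" by (simp add: e_def)
  then have "c*e \<le> c*((T-M)/(2*c))" using c by (intro mult_left_mono) auto
  also have "\<dots> = (T-M)/2" using c by simp
  finally have "c*e \<le> (T-M)/2" .
  moreover have "T - c*e \<le> M" using h[OF e0 e1] .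
  ultimately have "T - M \<le> (T-M)/2" by linarith
  then show False using lt by (simp add: field_simps)
qed

lemma log_1p_le:
  assumes "b > 1" "x \<ge> 0"
  shows "log b (1 + x) \<le> x / ln b"
proof -
  have "ln (1+x) \<le> x" using assms by (intro ln_add_one_self_le_self) simp
  then show ?thesis using assms by (simp add: log_def divide_right_mono)
qed

lemma plogp_mult:
  assumes "c > 0" "x \<ge> 0"
  shows "plogp b (c*x) = c * plogp b x + c*x*log b c"
proof (cases "x = 0")
  case True then show ?thesis by (simp add: plogp_def)
next
  case False
  then have "x > 0" using assms by simp
  then show ?thesis using assms by (simp add: plogp_def log_mult algebra_simps)
qed

lemma plogp_pos: "p > 0 \<Longrightarrow> plogp b p = p * log b p"
  by (simp add: plogp_def)

lemma keyG:
  assumes b: "b > 1" and d0: "0 < \<delta>" and d1: "\<delta> < 1" and u0: "0 \<le> u" and u1: "u \<le> 1 - \<delta>"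
  shows "HX b \<delta> + plogp b (1-\<delta>-u) + plogp b \<delta> + plogp b u = (1-\<delta>)*(log b 2 - hb b (u/(1-\<delta>)))"
proof -
  define t where "t = u/(1-\<delta>)"
  have c: "1 - \<delta> > 0" using d1 by simp
  have t0: "t \<ge> 0" and t1: "1 - t \<ge> 0" using u0 u1 c by (auto simp: t_def field_simps)
  have u: "u = (1-\<delta>)*t" using c by (simp add: t_def)
  have v: "1-\<delta>-u = (1-\<delta>)*(1-t)" using c by (simp add: t_def field_simps)
  have e0: "plogp b (1-\<delta>) = (1-\<delta>) * log b (1-\<delta>)" using c by (simp add: plogp_def)
  have e1: "plogp b (1-\<delta>-u) = (1-\<delta>)*plogp b (1-t) + (1-\<delta>)*(1-t)*log b (1-\<delta>)"
    using plogp_mult[OF c t1, of b] v by simp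
  have e2: "plogp b u = (1-\<delta>)*plogp b t + (1-\<delta>)*t*log b (1-\<delta>)"
    using plogp_mult[OF c t0, of b] u by simp
  show ?thesis unfolding HX_def hb_def t_def[symmetric] e1 e2
    using e0 by (simp add: algebra_simps)
qed

lemma RD_eq:
  assumes "feasible \<delta> ds dx W0" "mutual_info b \<delta> W0 = T"
    "\<And>W. feasible \<delta> ds dx W \<Longrightarrow> mutual_info b \<delta> W \<ge> T"
  shows "RD b \<delta> ds dx = T"
  unfolding RD_def
  by (rule cInf_eq_minimum) (use assms in auto)

lemma MI_markov:
  assumes b: "b > 1" and d0: "0 < \<delta>" and d1: "\<delta> < 1"
    and JPK: "\<And>x z y. J x z y = P z y * K x z y"
    and Pnn: "\<And>z y. P z y \<ge> 0" and Knn: "\<And>x z y. K x z y \<ge> 0"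
    and Ks: "\<And>z y. P z y = 0 \<or> (\<Sum>x\<in>UNIV. K x z y) = 1"
    and marg: "\<And>x. (\<Sum>z\<in>UNIV. \<Sum>y\<in>UNIV. J x z y) = PX \<delta> x"
  shows "mutual_info b \<delta> (\<lambda>x z y. J x z y / PX \<delta> x)
     = HX b \<delta> + (\<Sum>z\<in>UNIV. \<Sum>y\<in>UNIV. P z y * (\<Sum>x\<in>UNIV. plogp b (K x z y)))"
proof -
  have PXp: "\<And>x. PX \<delta> x > 0" using PX_pos d0 d1 by blast
  have Psum: "(\<Sum>x\<in>UNIV. J x z y) = P z y" for z y
  proof -
    have "(\<Sum>x\<in>UNIV. J x z y) = P z y * (\<Sum>x\<in>UNIV. K x z y)" by (simp add: JPK sum_distrib_left)
    then show ?thesis using Ks[of z y] by auto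
  qed
  have trm: "(let p = PX \<delta> x * (J x z y / PX \<delta> x);
             q = (\<Sum>x'\<in>UNIV. PX \<delta> x' * (J x' z y / PX \<delta> x'))
         in if p = 0 then 0 else p * log b ((J x z y / PX \<delta> x) / q))
     = P z y * plogp b (K x z y) - J x z y * log b (PX \<delta> x)" for x z y
  proof -
    have q: "(\<Sum>x'\<in>UNIV. PX \<delta> x' * (J x' z y / PX \<delta> x')) = P z y"
      using PXp Psum by (simp add: less_imp_neq[symmetric])
    have p: "PX \<delta> x * (J x z y / PX \<delta> x) = J x z y" using PXp[of x] by simp
    show ?thesis
    proof (cases "J x z y = 0")
      case True
      then have "P z y = 0 \<or> K x z y = 0" using JPK by simp
      then show ?thesis using True by (auto simp: Let_def p plogp_def)
    next
      case False
      then have Pp: "P z y > 0" and Kp: "K x z y > 0" using JPK[of x z y] Pnn[of z y] Knn[of x z y]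
        by (auto simp: less_le)
      have "(J x z y / PX \<delta> x) / P z y = K x z y / PX \<delta> x" using Pp by (simp add: JPK)
      moreover have "log b (K x z y / PX \<delta> x) = log b (K x z y) - log b (PX \<delta> x)"
        using Kp PXp[of x] by (simp add: log_divide)
      ultimately have hl: "log b ((J x z y / PX \<delta> x) / P z y) = log b (K x z y) - log b (PX \<delta> x)" by simp
      have "(let p = PX \<delta> x * (J x z y / PX \<delta> x);
             q = (\<Sum>x'\<in>UNIV. PX \<delta> x' * (J x' z y / PX \<delta> x'))
         in if p = 0 then 0 else p * log b ((J x z y / PX \<delta> x) / q)) = J x z y * log b ((J x z y / PX \<delta> x) / P z y)"
        using False unfolding Let_def p q by simp
      also have "\<dots> = J x z y * (log b (K x z y) - log b (PX \<delta> x))" unfolding hl ..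
      also have "\<dots> = P z y * plogp b (K x z y) - J x z y * log b (PX \<delta> x)"
        using Kp by (simp add: plogp_def JPK algebra_simps)
      finally show ?thesis .
    qed
  qed
  have "mutual_info b \<delta> (\<lambda>x z y. J x z y / PX \<delta> x)
     = (\<Sum>x\<in>UNIV. \<Sum>z\<in>UNIV. \<Sum>y\<in>UNIV. P z y * plogp b (K x z y)) - (\<Sum>x\<in>UNIV. \<Sum>z\<in>UNIV. \<Sum>y\<in>UNIV. J x z y * log b (PX \<delta> x))"
    unfolding mutual_info_def trm by (simp add: sum_subtractf)
  also have "(\<Sum>x\<in>UNIV. \<Sum>z\<in>UNIV. \<Sum>y\<in>UNIV. P z y * plogp b (K x z y)) = (\<Sum>z\<in>UNIV. \<Sum>y\<in>UNIV. P z y * (\<Sum>x\<in>UNIV. plogp b (K x z y)))"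
    by (simp add: sum3_swap sum_distrib_left)
  also have "(\<Sum>x\<in>UNIV. \<Sum>z\<in>UNIV. \<Sum>y\<in>UNIV. J x z y * log b (PX \<delta> x)) = (\<Sum>x\<in>UNIV. PX \<delta> x * log b (PX \<delta> x))"
    using marg by (simp add: sum_distrib_right[symmetric])
  finally show ?thesis using HX_alt[OF b d0 d1] by simp
qed

lemma feasJ:
  assumes d0: "0 < \<delta>" and d1: "\<delta> < 1" and Jnn: "\<And>x z y. J x z y \<ge> 0"
    and marg: "\<And>x. (\<Sum>z\<in>UNIV. \<Sum>y\<in>UNIV. J x z y) = PX \<delta> x"
    and es: "(\<Sum>x\<in>UNIV. \<Sum>z\<in>UNIV. \<Sum>y\<in>UNIV. J x z y * dsbar \<delta> x z) \<le> ds"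
    and ex: "(\<Sum>x\<in>UNIV. \<Sum>z\<in>UNIV. \<Sum>y\<in>UNIV. J x z y * d_x x y) \<le> dx"
  shows "feasible \<delta> ds dx (\<lambda>x z y. J x z y / PX \<delta> x)"
proof -
  have PXp: "\<And>x. PX \<delta> x > 0" using PX_pos d0 d1 by blast
  have p: "\<And>x z y. PX \<delta> x * (J x z y / PX \<delta> x) = J x z y" using PXp by (simp add: less_imp_neq[symmetric])
  have "cond_pmf (\<lambda>x z y. J x z y / PX \<delta> x)"
    unfolding cond_pmf_def
  proof (intro conjI allI)
    fix x z y show "0 \<le> J x z y / PX \<delta> x" using Jnn PXp[of x] by simp
  next
    fix x
    have "(\<Sum>z\<in>UNIV. \<Sum>y\<in>UNIV. J x z y / PX \<delta> x) = (\<Sum>z\<in>UNIV. \<Sum>y\<in>UNIV. J x z y) / PX \<delta> x"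
      by (simp add: sum_divide_distrib)
    then show "(\<Sum>z\<in>UNIV. \<Sum>y\<in>UNIV. J x z y / PX \<delta> x) = 1" using marg PXp[of x] by simp
  qed
  moreover have "exp_ds \<delta> (\<lambda>x z y. J x z y / PX \<delta> x) \<le> ds" using es unfolding exp_ds_def p .
  moreover have "exp_dx \<delta> (\<lambda>x z y. J x z y / PX \<delta> x) \<le> dx" using ex unfolding exp_dx_def p .
  ultimately show ?thesis by (simp add: feasible_def)
qed




lemma LB_dx0:
  assumes b: "b > 1" and d0: "0 < \<delta>" and d1: "\<delta> < 1" and F: "feasible \<delta> ds 0 W"
  shows "mutual_info b \<delta> W \<ge> HX b \<delta>"
proof (rule eps_bound[where c="2/ln b"])
  show "2 / ln b > 0" using b by simp
next
  fix e :: real assume e0: "0 < e" and e1: "e \<le> 1"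
  define w where "w = 1/(1+2*e)"
  have w0: "w > 0" using e0 by (simp add: w_def)
  have C: "w*(1 + 1^2*e) + w*1*e \<le> 1" using e0 by (simp add: w_def field_simps)
  have C3: "w*e*(1+1^2) + w*1 \<le> 1" using e0 by (simp add: w_def field_simps)
  have M: "mutual_info b \<delta> W \<ge> HX b \<delta> + (1-\<delta>)*log b w + \<delta>*log b w + 2*ds*log b 1 + 0*log b e"
    by (rule dualF[OF b d0 d1 F w0 w0 _ _ e0 e1 C C3]) auto
  have lw: "log b w = - log b (1+2*e)" using e0 b by (simp add: w_def log_divide)
  have "log b (1+2*e) \<le> (2*e)/ln b" using log_1p_le[OF b, of "2*e"] e0 by simp
  then show "mutual_info b \<delta> W \<ge> HX b \<delta> - 2/ln b * e" using M lw by (simp add: algebra_simps)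
qed



lemma LB_D1pos:
  assumes b: "b > 1" and d0: "0 < \<delta>" and d1: "\<delta> < 1" and F: "feasible \<delta> ds dx W"
    and x0: "0 < dx" and x1: "dx < 2/3"
  shows "mutual_info b \<delta> W \<ge> HX b \<delta> - hb b dx - dx * log b 2"
proof -
  define w where "w = 1 - dx"
  define be where "be = dx/(2*(1-dx))"
  have w0: "w > 0" using x1 by (simp add: w_def)
  have be0: "be > 0" using x0 x1 by (simp add: be_def)
  have be1: "be \<le> 1" using x0 x1 by (simp add: be_def field_simps)
  have C: "w*(1 + 1^2*be) + w*1*be \<le> 1" using x1 by (simp add: w_def be_def field_simps)
  have C3: "w*be*(1+1^2) + w*1 \<le> 1" using x1 by (simp add: w_def be_def field_simps)
  have M: "mutual_info b \<delta> W \<ge> HX b \<delta> + (1-\<delta>)*log b w + \<delta>*log b w + 2*ds*log b 1 + dx*log b be"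
    by (rule dualF[OF b d0 d1 F w0 w0 _ _ be0 be1 C C3]) auto
  have l1: "log b be = log b dx - log b (2*(1-dx))"
    using x0 x1 b unfolding be_def by (intro log_divide_pos) auto
  have l2: "log b (2*(1-dx)) = log b 2 + log b (1-dx)"
    using x0 x1 b by (intro log_mult_pos) auto
  have lb: "log b be = log b dx - log b 2 - log b (1-dx)" using l1 l2 by simp
  have "hb b dx = - dx * log b dx - (1-dx) * log b (1-dx)"
    using x0 x1 by (simp add: hb_def plogp_def)
  then show ?thesis using M lb by (simp add: w_def algebra_simps)
qed



lemma LB_D2:
  assumes b: "b > 1" and d0: "0 < \<delta>" and d1: "\<delta> < 1/3" and F: "feasible \<delta> ds dx W"
    and x0: "2*\<delta> \<le> dx" and x1: "dx \<le> 1/2 + \<delta>/2"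
  shows "mutual_info b \<delta> W \<ge> (1 - \<delta>) * (log b 2 - hb b ((dx - \<delta>) / (1 - \<delta>)))"
proof -
  define u where "u = dx - \<delta>"
  have u0: "u > 0" using x0 d0 by (simp add: u_def)
  have ud: "\<delta> \<le> u" using x0 by (simp add: u_def)
  have u1: "2*u \<le> 1 - \<delta>" using x1 by (simp add: u_def)
  have p3: "1 - dx > 0" using x1 d1 by simp
  define wb where "wb = 1 - dx"
  define be where "be = u/(1-dx)"
  define we where "we = \<delta>*(1-dx)/u"
  have wb0: "wb > 0" using p3 by (simp add: wb_def)
  have we0: "we > 0" using p3 u0 d0 by (simp add: we_def)
  have be0: "be > 0" using u0 p3 by (simp add: be_def)
  have be1: "be \<le> 1" using u0 p3 u1 d0 by (simp add: be_def u_def field_simps)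
  have q1: "wb*be = u" using p3 by (simp add: wb_def be_def)
  have q2: "we*be = \<delta>" using p3 u0 by (simp add: we_def be_def)
  have C: "wb*(1 + 1^2*be) + we*1*be \<le> 1" using q1 q2 by (simp add: wb_def u_def algebra_simps)
  have C3: "wb*be*(1+1^2) + we*1 \<le> 1"
  proof -
    have "(u - \<delta>)*(2*u - (1-\<delta>)) \<le> 0" using ud u1 by (intro mult_nonneg_nonpos) auto
    then have "\<delta>*(1-dx) \<le> u*(1 - 2*u)" by (simp add: u_def algebra_simps)
    then have "\<delta>*(1-dx)/u \<le> 1 - 2*u" using u0 by (simp add: divide_le_eq mult.commute)
    then show ?thesis using p3 by (simp add: wb_def we_def be_def)
  qed
  have M: "mutual_info b \<delta> W \<ge> HX b \<delta> + (1-\<delta>)*log b wb + \<delta>*log b we + 2*ds*log b 1 + dx*log b be"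
    by (rule dualF[OF b d0 _ F wb0 we0 _ _ be0 be1 C C3]) (use d1 in auto)
  have lwe: "log b we = log b \<delta> + log b (1-dx) - log b u"
    using d0 p3 u0 b by (simp add: we_def log_divide log_mult)
  have lbe: "log b be = log b u - log b (1-dx)"
    using p3 u0 b by (simp add: be_def log_divide)
  have val: "HX b \<delta> + (1-\<delta>)*log b wb + \<delta>*log b we + 2*ds*log b 1 + dx*log b be
      = HX b \<delta> + plogp b (1-\<delta>-u) + plogp b \<delta> + plogp b u"
    using p3 u0 d0 unfolding lwe lbe by (simp add: wb_def plogp_def u_def algebra_simps)
  have "HX b \<delta> + plogp b (1-\<delta>-u) + plogp b \<delta> + plogp b u = (1-\<delta>)*(log b 2 - hb b (u/(1-\<delta>)))"
    by (rule keyG[OF b d0]) (use d1 u0 u1 in auto)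
  then show ?thesis using M val by (simp add: u_def)
qed




lemma LB_D3pos:
  assumes b: "b > 1" and d0: "0 < \<delta>" and d1: "\<delta> < 1/3" and F: "feasible \<delta> ds dx W"
    and s0: "\<delta>/2 < ds" and s1: "ds \<le> 1/2"
  shows "mutual_info b \<delta> W \<ge> (1 - \<delta>) * (log b 2 - hb b ((ds - \<delta>/2) / (1 - \<delta>)))"
proof -
  define p1 where "p1 = ds - \<delta>/2"
  define p3 where "p3 = 1 - ds - \<delta>/2"
  have p10: "p1 > 0" using s0 by (simp add: p1_def)
  have p30: "p3 > 0" using s1 d1 by (simp add: p3_def)
  have p13: "p1 \<le> p3" using s1 by (simp add: p1_def p3_def)
  define a where "a = sqrt (p1/p3)"
  have a0: "a > 0" using p10 p30 by (simp add: a_def)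
  have a1: "a \<le> 1" using p13 p30 by (simp add: a_def)
  have a2: "a^2 = p1/p3" using p10 p30 by (simp add: a_def)
  define we where "we = \<delta>/a"
  have we0: "we > 0" using d0 a0 by (simp add: we_def)
  have q: "we*a = \<delta>" using a0 by (simp add: we_def)
  have q2: "p3*(1+a^2) = p3 + p1" using p30 by (simp add: a2 field_simps)
  have C: "p3*(1 + a^2*1) + we*a*1 \<le> 1" using q q2 by (simp add: p1_def p3_def)
  have C3: "p3*1*(1+a^2) + we*a \<le> 1" using q q2 by (simp add: p1_def p3_def)
  have M: "mutual_info b \<delta> W \<ge> HX b \<delta> + (1-\<delta>)*log b p3 + \<delta>*log b we + 2*ds*log b a + dx*log b 1"
    by (rule dualF[OF b d0 _ F p30 we0 a0 a1 _ _ C C3]) (use d1 in auto)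
  have la2: "2 * log b a = log b p1 - log b p3"
  proof -
    have "log b (a^2) = 2 * log b a" using a0 by (simp add: log_nat_power)
    moreover have "log b (a^2) = log b p1 - log b p3" unfolding a2 using p10 p30 by (simp add: log_divide_pos)
    ultimately show ?thesis by simp
  qed
  have lwe: "log b we = log b \<delta> - log b a" using d0 a0 by (simp add: we_def log_divide_pos)
  have "HX b \<delta> + (1-\<delta>)*log b p3 + \<delta>*log b we + 2*ds*log b a + dx*log b 1
      = HX b \<delta> + (1-\<delta>)*log b p3 + \<delta>*log b \<delta> + p1 * (2 * log b a)"
    unfolding lwe by (simp add: p1_def algebra_simps)
  also have "\<dots> = HX b \<delta> + plogp b (1-\<delta>-p1) + plogp b \<delta> + plogp b p1"
    unfolding la2 using p10 p30 d0 by (simp add: plogp_def p1_def p3_def algebra_simps)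
  also have "\<dots> = (1-\<delta>)*(log b 2 - hb b (p1/(1-\<delta>)))"
    by (rule keyG[OF b d0]) (use d1 p10 p13 in \<open>auto simp: p1_def p3_def\<close>)
  finally show ?thesis using M by (simp add: p1_def)
qed



lemma LB_D3zero:
  assumes b: "b > 1" and d0: "0 < \<delta>" and d1: "\<delta> < 1/3" and F: "feasible \<delta> ds dx W"
    and s0: "ds = \<delta>/2"
  shows "mutual_info b \<delta> W \<ge> (1 - \<delta>) * (log b 2 - hb b ((ds - \<delta>/2) / (1 - \<delta>)))"
proof -
  have T: "(1 - \<delta>) * (log b 2 - hb b ((ds - \<delta>/2) / (1 - \<delta>))) = HX b \<delta> + plogp b (1-\<delta>-0) + plogp b \<delta> + plogp b 0"
    unfolding s0 using keyG[OF b d0, of 0] d1 by simp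
  have "mutual_info b \<delta> W \<ge> HX b \<delta> + plogp b (1-\<delta>-0) + plogp b \<delta> + plogp b 0"
  proof (rule eps_bound[where c="1/ln b"])
    show "1 / ln b > 0" using b by simp
  next
    fix e :: real assume e0: "0 < e" and e1: "e \<le> 1"
    have "e^2 \<ge> 0" by simp
    then have ep: "1 + e^2 > 0" by linarith
    define wb where "wb = (1-\<delta>)/(1+e^2)"
    define we where "we = \<delta>/e"
    have wb0: "wb > 0" using d1 ep by (simp add: wb_def)
    have we0: "we > 0" using d0 e0 by (simp add: we_def)
    have q: "we*e = \<delta>" using e0 by (simp add: we_def)
    have q2: "wb*(1+e^2) = 1-\<delta>" using ep by (simp add: wb_def)
    have C: "wb*(1 + e^2*1) + we*e*1 \<le> 1" using q q2 by simp
    have C3: "wb*1*(1+e^2) + we*e \<le> 1" using q q2 by simp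
    have M: "mutual_info b \<delta> W \<ge> HX b \<delta> + (1-\<delta>)*log b wb + \<delta>*log b we + 2*ds*log b e + dx*log b 1"
      by (rule dualF[OF b d0 _ F wb0 we0 e0 e1 _ _ C C3]) (use d1 in auto)
    have lwb: "log b wb = log b (1-\<delta>) - log b (1+e^2)" using d1 ep by (simp add: wb_def log_divide_pos)
    have lwe: "log b we = log b \<delta> - log b e" using d0 e0 by (simp add: we_def log_divide_pos)
    have L0: "log b (1+e^2) \<ge> 0" using b ep by simp
    have L1: "log b (1+e^2) \<le> e^2/ln b" using log_1p_le[OF b, of "e^2"] by simp
    have "e^2 \<le> e" using e0 e1 by (simp add: power2_eq_square mult_le_cancel_left1)
    then have "e^2/ln b \<le> e/ln b" using b by (simp add: divide_right_mono)
    moreover have "(1-\<delta>)*log b (1+e^2) \<le> log b (1+e^2)"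
      using L0 d0 d1 by (intro mult_left_le_one_le) auto
    ultimately have L2: "(1-\<delta>)*log b (1+e^2) \<le> 1/ln b * e" using L1 by simp
    have "plogp b (1-\<delta>) = (1-\<delta>)*log b (1-\<delta>)" "plogp b \<delta> = \<delta>*log b \<delta>" "plogp b 0 = 0"
      using d0 d1 by (auto simp: plogp_def)
    then show "mutual_info b \<delta> W \<ge> HX b \<delta> + plogp b (1-\<delta>-0) + plogp b \<delta> + plogp b 0 - 1/ln b * e"
      using M L2 unfolding lwb lwe s0 by (simp add: algebra_simps)
  qed
  then show ?thesis using T by simp
qed



lemma LB_D4pos:
  assumes b: "b > 1" and d0: "0 < \<delta>" and d1: "\<delta> < 1/3" and F: "feasible \<delta> ds dx W"
    and p10: "ds - \<delta>/2 > 0" and p12: "ds - \<delta>/2 \<le> dx - ds + \<delta>/2" and p23: "dx - ds + \<delta>/2 \<le> 1 - dx"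
    and p30: "1 - dx > 0"
  shows "mutual_info b \<delta> W \<ge> HX b \<delta> - H3 b (ds - \<delta>/2) (dx - ds + \<delta>/2) (1 - dx)"
proof -
  define p1 where "p1 = ds - \<delta>/2"
  define p2 where "p2 = dx - ds + \<delta>/2"
  define p3 where "p3 = 1 - dx"
  have s: "p1 + p2 + p3 = 1" by (simp add: p1_def p2_def p3_def)
  have P1: "p1 > 0" "p1 \<le> p2" "p2 \<le> p3" "p3 > 0" using p10 p12 p23 p30 by (auto simp: p1_def p2_def p3_def)
  have P2: "p2 > 0" using P1 by simp
  define a where "a = sqrt (p1/p2)"
  have a0: "a > 0" using P1 P2 by (simp add: a_def)
  have a1: "a \<le> 1" using P1 P2 by (simp add: a_def)
  have a2: "a^2 = p1/p2" using P1 P2 by (simp add: a_def)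
  define be where "be = p2/p3"
  have be0: "be > 0" using P1 P2 by (simp add: be_def)
  have be1: "be \<le> 1" using P1 by (simp add: be_def)
  define we where "we = p3/a"
  have we0: "we > 0" using P1 a0 by (simp add: we_def)
  have q: "we*a = p3" using a0 by (simp add: we_def)
  have q1: "p3*be = p2" using P1 by (simp add: be_def)
  have q2: "p2*a^2 = p1" using P2 by (simp add: a2)
  have C: "p3*(1 + a^2*be) + we*a*be \<le> 1"
  proof -
    have "p3*(1 + a^2*be) + we*a*be = p3 + a^2*(p3*be) + (we*a)*be" by (simp add: algebra_simps)
    also have "\<dots> = p3 + p1 + p2" unfolding q q1 using q2 by (simp add: mult.commute)
    finally show ?thesis using s by simp
  qed
  have C3: "p3*be*(1+a^2) + we*a \<le> 1"
  proof -
    have "p3*be*(1+a^2) + we*a = p2 + p2*a^2 + p3" unfolding q q1 by (simp add: algebra_simps)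
    then show ?thesis using q2 s by simp
  qed
  have M: "mutual_info b \<delta> W \<ge> HX b \<delta> + (1-\<delta>)*log b p3 + \<delta>*log b we + 2*ds*log b a + dx*log b be"
    by (rule dualF[OF b d0 _ F P1(4) we0 a0 a1 be0 be1 C C3]) (use d1 in auto)
  have la2: "2 * log b a = log b p1 - log b p2"
  proof -
    have "log b (a^2) = 2 * log b a" using a0 by (simp add: log_nat_power)
    moreover have "log b (a^2) = log b p1 - log b p2" unfolding a2 using P1 P2 by (simp add: log_divide_pos)
    ultimately show ?thesis by simp
  qed
  have lwe: "log b we = log b p3 - log b a" using P1 a0 by (simp add: we_def log_divide_pos)
  have lbe: "log b be = log b p2 - log b p3" using P1 P2 by (simp add: be_def log_divide_pos)
  have "HX b \<delta> + (1-\<delta>)*log b p3 + \<delta>*log b we + 2*ds*log b a + dx*log b be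
      = HX b \<delta> + (1-dx)*log b p3 + dx*log b p2 + p1 * (2 * log b a)"
    unfolding lwe lbe by (simp add: p1_def algebra_simps)
  also have "\<dots> = HX b \<delta> - H3 b p1 p2 p3"
    unfolding la2 using P1 P2 by (simp add: H3_def plogp_def p1_def p2_def p3_def algebra_simps)
  finally show ?thesis using M by (simp add: p1_def p2_def p3_def)
qed



lemma LB_D4zero:
  assumes b: "b > 1" and d0: "0 < \<delta>" and d1: "\<delta> < 1/3" and F: "feasible \<delta> ds dx W"
    and s0: "ds = \<delta>/2" and x0: "0 < dx" and x1: "dx \<le> \<delta>"
  shows "mutual_info b \<delta> W \<ge> HX b \<delta> - H3 b (ds - \<delta>/2) (dx - ds + \<delta>/2) (1 - dx)"
proof -
  have T: "HX b \<delta> - H3 b (ds - \<delta>/2) (dx - ds + \<delta>/2) (1 - dx) = HX b \<delta> + dx*log b dx + (1-dx)*log b (1-dx)"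
    unfolding s0 using x0 x1 d1 by (simp add: H3_def plogp_def)
  have p3: "1 - dx > 0" using x1 d1 by simp
  have "mutual_info b \<delta> W \<ge> HX b \<delta> + dx*log b dx + (1-dx)*log b (1-dx)"
  proof (rule eps_bound[where c="1/ln b"])
    show "1 / ln b > 0" using b by simp
  next
    fix e :: real assume e0: "0 < e" and e1: "e \<le> 1"
    have "e^2*dx \<ge> 0" using x0 by simp
    then have ep: "1 + e^2*dx > 0" by linarith
    define be where "be = dx/(1-dx)"
    define k where "k = (1-dx)/(1+e^2*dx)"
    define we where "we = k/e"
    have be0: "be > 0" using x0 p3 by (simp add: be_def)
    have be1: "be \<le> 1" using x1 d1 p3 by (simp add: be_def)
    have k0: "k > 0" using p3 ep by (simp add: k_def)
    have we0: "we > 0" using k0 e0 by (simp add: we_def)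
    have q: "we*e = k" using e0 by (simp add: we_def)
    have kk: "k*(1 + be + e^2*be) = 1"
    proof -
      have "1 + be + e^2*be = (1+e^2*dx)/(1-dx)" using p3 by (simp add: be_def field_simps)
      then show ?thesis using p3 ep by (simp add: k_def)
    qed
    have C: "k*(1 + e^2*be) + we*e*be \<le> 1" using kk unfolding q by (simp add: algebra_simps)
    have C3: "k*be*(1+e^2) + we*e \<le> 1" using kk unfolding q by (simp add: algebra_simps)
    have M: "mutual_info b \<delta> W \<ge> HX b \<delta> + (1-\<delta>)*log b k + \<delta>*log b we + 2*ds*log b e + dx*log b be"
      by (rule dualF[OF b d0 _ F k0 we0 e0 e1 be0 be1 C C3]) (use d1 in auto)
    have lk: "log b k = log b (1-dx) - log b (1+e^2*dx)" using p3 ep by (simp add: k_def log_divide_pos)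
    have lwe: "log b we = log b k - log b e" using k0 e0 by (simp add: we_def log_divide_pos)
    have lbe: "log b be = log b dx - log b (1-dx)" using p3 x0 by (simp add: be_def log_divide_pos)
    have L0: "log b (1+e^2*dx) \<le> e^2*dx/ln b" using log_1p_le[OF b, of "e^2*dx"] x0 by simp
    have "e^2*dx \<le> e"
    proof -
      have "e^2 \<le> e" using e0 e1 by (simp add: power2_eq_square mult_le_cancel_left1)
      moreover have "e^2*dx \<le> e^2" using x1 d1 by (simp add: mult_left_le)
      ultimately show ?thesis by simp
    qed
    then have "e^2*dx/ln b \<le> e/ln b" using b by (intro divide_right_mono) auto
    then have L1: "log b (1+e^2*dx) \<le> 1/ln b * e" using L0 by simp
    show "mutual_info b \<delta> W \<ge> HX b \<delta> + dx*log b dx + (1-dx)*log b (1-dx) - 1/ln b * e"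
      using M L1 unfolding lwe lk lbe s0 by (simp add: algebra_simps)
  qed
  then show ?thesis using T by simp
qed



lemma LB_D5:
  assumes b: "b > 1" and d0: "0 < \<delta>" and d1: "\<delta> < 1" and F: "feasible \<delta> ds dx W"
  shows "mutual_info b \<delta> W \<ge> 0"
proof -
  have wb0: "(1-\<delta>)/2 > 0" using d1 by simp
  have "(1-\<delta>)/2*(1 + 1^2*1) = 1-\<delta>" by simp
  then have C: "(1-\<delta>)/2*(1 + 1^2*1) + \<delta>*1*1 \<le> 1" by (simp only: mult_1_right, linarith?)
  have "(1-\<delta>)/2*1*(1+1^2) = 1-\<delta>" by simp
  then have C3: "(1-\<delta>)/2*1*(1+1^2) + \<delta>*1 \<le> 1" by (simp only: mult_1_right, linarith?)
  have M: "mutual_info b \<delta> W \<ge> HX b \<delta> + (1-\<delta>)*log b ((1-\<delta>)/2) + \<delta>*log b \<delta> + 2*ds*log b 1 + dx*log b 1"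
    by (rule dualF[OF b d0 d1 F wb0 d0 _ _ _ _ C C3]) auto
  have "(1-\<delta>)*log b ((1-\<delta>)/2) + \<delta>*log b \<delta> = - HX b \<delta>"
    using HX_alt[OF b d0 d1] by (simp add: sum_x PX_vals algebra_simps)
  then show ?thesis using M by simp
qed






lemma finish:
  assumes "\<And>x. (\<Sum>z\<in>UNIV. \<Sum>y\<in>UNIV. J x z y) = PX \<delta> x"
    and F: "feasible \<delta> ds dx (\<lambda>x z y. J x z y / PX \<delta> x)"
    and MI: "mutual_info b \<delta> (\<lambda>x z y. J x z y / PX \<delta> x) = T"
    and LB: "\<And>W. feasible \<delta> ds dx W \<Longrightarrow> mutual_info b \<delta> W \<ge> T"
  shows "RD b \<delta> ds dx = T \<and> attains b \<delta> ds dx J"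
proof -
  have R: "RD b \<delta> ds dx = T" by (rule RD_eq[OF F MI LB])
  then show ?thesis using assms by (simp add: attains_def)
qed

lemma case3:
  assumes b: "b > 1" and d0: "0 < \<delta>" and d1: "\<delta> < 1/3" and D: "D3 \<delta> ds dx"
  shows "RD b \<delta> ds dx = (1 - \<delta>) * (log b 2 - hb b ((ds - \<delta>/2) / (1 - \<delta>))) \<and> attains b \<delta> ds dx (J3 \<delta> ds)"
proof -
  have d1': "\<delta> < 1" using d1 by simp
  have s0: "\<delta>/2 \<le> ds" and s1: "ds \<le> 1/2" and xs: "ds + \<delta>/2 \<le> dx" using D by (auto simp: D3_def)
  note dsv = dsbar_vals[OF d0 d1']
  have Jnn: "J3 \<delta> ds x z y \<ge> 0" for x z y
    using s0 s1 d1 d0 by (cases x; cases z; cases y) (simp_all add: J3_def PXgZ3_def)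
  have marg: "(\<Sum>z\<in>UNIV. \<Sum>y\<in>UNIV. J3 \<delta> ds x z y) = PX \<delta> x" for x
    by (cases x) (simp_all add: sum_x sum_z J3_def PXgZ3_def PX_vals field_simps)
  have es: "(\<Sum>x\<in>UNIV. \<Sum>z\<in>UNIV. \<Sum>y\<in>UNIV. J3 \<delta> ds x z y * dsbar \<delta> x z) \<le> ds"
    by (simp add: sum_x sum_z J3_def PXgZ3_def dsv field_simps)
  have ex: "(\<Sum>x\<in>UNIV. \<Sum>z\<in>UNIV. \<Sum>y\<in>UNIV. J3 \<delta> ds x z y * d_x x y) \<le> dx"
    using xs by (simp add: sum_x sum_z J3_def PXgZ3_def d_x_def field_simps)
  have F: "feasible \<delta> ds dx (\<lambda>x z y. J3 \<delta> ds x z y / PX \<delta> x)"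
    by (rule feasJ[OF d0 d1' Jnn marg es ex])
  define P where "P z y = (1/2::real) * (if y = emb z then 1 else 0)" for z y
  define K where "K x z y = PXgZ3 \<delta> ds x z" for x z and y :: xsym
  have MI0: "mutual_info b \<delta> (\<lambda>x z y. J3 \<delta> ds x z y / PX \<delta> x)
     = HX b \<delta> + (\<Sum>z\<in>UNIV. \<Sum>y\<in>UNIV. P z y * (\<Sum>x\<in>UNIV. plogp b (K x z y)))"
  proof (rule MI_markov[OF b d0 d1'])
    show "J3 \<delta> ds x z y = P z y * K x z y" for x z y by (simp add: J3_def P_def K_def)
    show "P z y \<ge> 0" for z y by (simp add: P_def)
    show "K x z y \<ge> 0" for x z y using s0 s1 d1 d0 by (cases x; cases z) (simp_all add: K_def PXgZ3_def)
    show "P z y = 0 \<or> (\<Sum>x\<in>UNIV. K x z y) = 1" for z y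
      by (cases z) (simp_all add: P_def K_def sum_x PXgZ3_def)
    show "(\<Sum>z\<in>UNIV. \<Sum>y\<in>UNIV. J3 \<delta> ds x z y) = PX \<delta> x" for x by (rule marg)
  qed
  have S: "(\<Sum>z\<in>UNIV. \<Sum>y\<in>UNIV. P z y * (\<Sum>x\<in>UNIV. plogp b (K x z y)))
     = plogp b (1-\<delta>-(ds-\<delta>/2)) + plogp b \<delta> + plogp b (ds-\<delta>/2)"
  proof -
    have e: "1-\<delta>-(ds-\<delta>/2) = 1 - ds - \<delta>/2" by simp
    show ?thesis unfolding e by (simp add: sum_x sum_z P_def K_def PXgZ3_def; simp add: field_simps)
  qed
  have T: "HX b \<delta> + plogp b (1-\<delta>-(ds-\<delta>/2)) + plogp b \<delta> + plogp b (ds-\<delta>/2) = (1 - \<delta>) * (log b 2 - hb b ((ds - \<delta>/2) / (1 - \<delta>)))"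
    by (rule keyG[OF b d0 d1']) (use s0 s1 d1 in auto)
  have LB: "mutual_info b \<delta> W \<ge> (1 - \<delta>) * (log b 2 - hb b ((ds - \<delta>/2) / (1 - \<delta>)))" if FW: "feasible \<delta> ds dx W" for W
  proof (cases "ds = \<delta>/2")
    case True then show ?thesis using LB_D3zero[OF b d0 d1 FW] by simp
  next
    case False then show ?thesis using LB_D3pos[OF b d0 d1 FW] s0 s1 by simp
  qed
  show ?thesis by (rule finish[OF marg F _ LB]) (use MI0 S T in simp)
qed




lemma case2:
  assumes b: "b > 1" and d0: "0 < \<delta>" and d1: "\<delta> < 1/3" and D: "D2 \<delta> ds dx"
  shows "RD b \<delta> ds dx = (1 - \<delta>) * (log b 2 - hb b ((dx - \<delta>) / (1 - \<delta>))) \<and> attains b \<delta> ds dx (J2 \<delta> dx)"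
proof -
  have d1': "\<delta> < 1" using d1 by simp
  have x0: "2*\<delta> \<le> dx" and x1: "dx \<le> 1/2 + \<delta>/2" and sx: "ds \<ge> dx - \<delta>/2" using D by (auto simp: D2_def)
  note dsv = dsbar_vals[OF d0 d1']
  have Jnn: "J2 \<delta> dx x z y \<ge> 0" for x z y
    using x0 x1 d1 d0 by (cases x; cases z; cases y) (simp_all add: J2_def PY2_def PXgY2_def)
  have marg: "(\<Sum>z\<in>UNIV. \<Sum>y\<in>UNIV. J2 \<delta> dx x z y) = PX \<delta> x" for x
    by (cases x) (simp_all add: sum_x sum_z J2_def PY2_def PXgY2_def PX_vals field_simps)
  have es: "(\<Sum>x\<in>UNIV. \<Sum>z\<in>UNIV. \<Sum>y\<in>UNIV. J2 \<delta> dx x z y * dsbar \<delta> x z) \<le> ds"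
    using sx by (simp add: sum_x sum_z J2_def PY2_def PXgY2_def dsv field_simps)
  have ex: "(\<Sum>x\<in>UNIV. \<Sum>z\<in>UNIV. \<Sum>y\<in>UNIV. J2 \<delta> dx x z y * d_x x y) \<le> dx"
    by (simp add: sum_x sum_z J2_def PY2_def PXgY2_def d_x_def field_simps)
  have F: "feasible \<delta> ds dx (\<lambda>x z y. J2 \<delta> dx x z y / PX \<delta> x)"
    by (rule feasJ[OF d0 d1' Jnn marg es ex])
  define P where "P z y = PY2 y * (if y = emb z then 1 else 0)" for z y
  define K where "K x (z::zsym) y = PXgY2 \<delta> dx x y" for x z y
  have MI0: "mutual_info b \<delta> (\<lambda>x z y. J2 \<delta> dx x z y / PX \<delta> x)
     = HX b \<delta> + (\<Sum>z\<in>UNIV. \<Sum>y\<in>UNIV. P z y * (\<Sum>x\<in>UNIV. plogp b (K x z y)))"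
  proof (rule MI_markov[OF b d0 d1'])
    show "J2 \<delta> dx x z y = P z y * K x z y" for x z y by (simp add: J2_def P_def K_def)
    show "P z y \<ge> 0" for z y by (simp add: P_def PY2_def)
    show "K x z y \<ge> 0" for x z y using x0 x1 d1 d0 by (cases x; cases y) (simp_all add: K_def PXgY2_def)
    show "P z y = 0 \<or> (\<Sum>x\<in>UNIV. K x z y) = 1" for z y
      by (cases z; cases y) (simp_all add: P_def PY2_def K_def sum_x PXgY2_def)
    show "(\<Sum>z\<in>UNIV. \<Sum>y\<in>UNIV. J2 \<delta> dx x z y) = PX \<delta> x" for x by (rule marg)
  qed
  have S: "(\<Sum>z\<in>UNIV. \<Sum>y\<in>UNIV. P z y * (\<Sum>x\<in>UNIV. plogp b (K x z y)))
     = plogp b (1-\<delta>-(dx-\<delta>)) + plogp b \<delta> + plogp b (dx-\<delta>)"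
    by (simp add: sum_x sum_z P_def PY2_def K_def PXgY2_def; simp add: field_simps)
  have T: "HX b \<delta> + plogp b (1-\<delta>-(dx-\<delta>)) + plogp b \<delta> + plogp b (dx-\<delta>) = (1 - \<delta>) * (log b 2 - hb b ((dx-\<delta>) / (1 - \<delta>)))"
    by (rule keyG[OF b d0 d1']) (use x0 x1 d1 d0 in auto)
  have LB: "mutual_info b \<delta> W \<ge> (1 - \<delta>) * (log b 2 - hb b ((dx - \<delta>) / (1 - \<delta>)))" if FW: "feasible \<delta> ds dx W" for W
    using LB_D2[OF b d0 d1 FW x0 x1] .
  show ?thesis by (rule finish[OF marg F _ LB]) (use MI0 S T in simp)
qed

lemma case5:
  assumes b: "b > 1" and d0: "0 < \<delta>" and d1: "\<delta> < 1/3" and D: "D5 \<delta> ds dx"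
  shows "RD b \<delta> ds dx = 0"
proof -
  have d1': "\<delta> < 1" using d1 by simp
  have x0: "dx \<ge> 1/2 + \<delta>/2" and s0: "ds \<ge> 1/2" using D by (auto simp: D5_def)
  note dsv = dsbar_vals[OF d0 d1']
  define J where "J x z y = (if z = Z0 \<and> y = X0 then 1 else 0) * PX \<delta> x" for x z y
  have Jnn: "J x z y \<ge> 0" for x z y using PX_pos[OF d0 d1'] by (simp add: J_def less_imp_le)
  have marg: "(\<Sum>z\<in>UNIV. \<Sum>y\<in>UNIV. J x z y) = PX \<delta> x" for x
    by (simp add: sum_x sum_z J_def)
  have es: "(\<Sum>x\<in>UNIV. \<Sum>z\<in>UNIV. \<Sum>y\<in>UNIV. J x z y * dsbar \<delta> x z) \<le> ds"
    using s0 by (simp add: sum_x sum_z J_def dsv PX_vals field_simps)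
  have ex: "(\<Sum>x\<in>UNIV. \<Sum>z\<in>UNIV. \<Sum>y\<in>UNIV. J x z y * d_x x y) \<le> dx"
    using x0 by (simp add: sum_x sum_z J_def d_x_def PX_vals field_simps)
  have F: "feasible \<delta> ds dx (\<lambda>x z y. J x z y / PX \<delta> x)"
    by (rule feasJ[OF d0 d1' Jnn marg es ex])
  have MI0: "mutual_info b \<delta> (\<lambda>x z y. J x z y / PX \<delta> x)
     = HX b \<delta> + (\<Sum>z\<in>UNIV. \<Sum>y\<in>UNIV. (if z = Z0 \<and> y = X0 then 1 else 0) * (\<Sum>x\<in>UNIV. plogp b (PX \<delta> x)))"
  proof (rule MI_markov[OF b d0 d1'])
    show "J x z y = (if z = Z0 \<and> y = X0 then 1 else 0) * PX \<delta> x" for x z y by (simp add: J_def)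
    show "(if z = Z0 \<and> y = X0 then 1 else 0::real) \<ge> 0" for z y by simp
    show "PX \<delta> x \<ge> 0" for x using PX_pos[OF d0 d1'] by (simp add: less_imp_le)
    show "(if z = Z0 \<and> y = X0 then 1 else 0::real) = 0 \<or> (\<Sum>x\<in>UNIV. PX \<delta> x) = 1" for z y
      using PX_sum by simp
    show "(\<Sum>z\<in>UNIV. \<Sum>y\<in>UNIV. J x z y) = PX \<delta> x" for x by (rule marg)
  qed
  have "(\<Sum>x\<in>UNIV. plogp b (PX \<delta> x)) = (\<Sum>x\<in>UNIV. PX \<delta> x * log b (PX \<delta> x))"
    using PX_pos[OF d0 d1'] by (intro sum.cong) (auto simp: plogp_def)
  then have MI: "mutual_info b \<delta> (\<lambda>x z y. J x z y / PX \<delta> x) = 0"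
    unfolding MI0 using HX_alt[OF b d0 d1'] by (simp add: sum_x sum_z)
  show ?thesis by (rule RD_eq[OF F MI]) (rule LB_D5[OF b d0 d1'])
qed




lemma case1:
  assumes b: "b > 1" and d0: "0 < \<delta>" and d1: "\<delta> < 1/3" and D: "D1 \<delta> ds dx"
    and th0: "0 \<le> \<theta>" and th1: "\<theta> \<le> 1"
  shows "RD b \<delta> ds dx = hb b \<delta> + (1 - \<delta>) * log b 2 - hb b dx - dx * log b 2 \<and> attains b \<delta> ds dx (J1 \<delta> dx \<theta>)"
proof -
  have d1': "\<delta> < 1" using d1 by simp
  have x0: "0 \<le> dx" and x1: "dx \<le> 2*\<delta>" and sx: "ds \<ge> dx/2 + \<delta>/2" using D by (auto simp: D1_def)
  have den: "2 - 3*dx > 0" using x1 d1 by simp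
  have n1: "1 - \<delta> - dx \<ge> 0" using x1 d1 by simp
  note dsv = dsbar_vals[OF d0 d1']
  have PYnn: "PY1 \<delta> dx y \<ge> 0" for y using den n1 x1 by (simp add: PY1_def)
  have PXnn: "PXgY1 dx x y \<ge> 0" for x y using x0 x1 d1 by (simp add: PXgY1_def)
  have PZnn: "PZgY1 \<theta> z y \<ge> 0" for z y using th0 th1 by (simp add: PZgY1_def)
  have Jnn: "J1 \<delta> dx \<theta> x z y \<ge> 0" for x z y
    using PYnn PXnn PZnn by (simp add: J1_def)
  have den': "2 - 3*dx \<noteq> 0" using den by simp
  define A where "A = (1-\<delta>-dx)/(2-3*dx)"
  define B where "B = (2*\<delta>-dx)/(2-3*dx)"
  have PYA: "PY1 \<delta> dx y = (if y = Xe then B else A)" for y by (simp add: PY1_def A_def B_def)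
  have hA: "A*(2-3*dx) = 1-\<delta>-dx" using den' by (simp add: A_def)
  have hB: "B*(2-3*dx) = 2*\<delta>-dx" using den' by (simp add: B_def)
  have R1: "2*A + B = 1"
  proof -
    have "(2*A+B)*(2-3*dx) = 2*(A*(2-3*dx)) + B*(2-3*dx)" by (simp add: algebra_simps)
    also have "\<dots> = 1*(2-3*dx)" unfolding hA hB by simp
    finally show ?thesis using den' by simp
  qed
  have swap: "(\<Sum>z\<in>UNIV. \<Sum>y\<in>UNIV. J1 \<delta> dx \<theta> x z y * f z y) = (\<Sum>y\<in>UNIV. PY1 \<delta> dx y * PXgY1 dx x y * (\<Sum>z\<in>UNIV. PZgY1 \<theta> z y * f z y))" for x f
    unfolding J1_def by (subst sum.swap) (simp add: sum_distrib_left mult.assoc)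
  have swap1: "(\<Sum>z\<in>UNIV. \<Sum>y\<in>UNIV. J1 \<delta> dx \<theta> x z y) = (\<Sum>y\<in>UNIV. PY1 \<delta> dx y * PXgY1 dx x y * (\<Sum>z\<in>UNIV. PZgY1 \<theta> z y))" for x
    using swap[of x "\<lambda>_ _. 1"] by simp
  have m0: "(\<Sum>z\<in>UNIV. \<Sum>y\<in>UNIV. J1 \<delta> dx \<theta> X0 z y) = PX \<delta> X0"
    unfolding swap1 using R1 hA by (simp add: sum_x sum_z PYA PXgY1_def PZgY1_def PX_vals) algebra
  have m1: "(\<Sum>z\<in>UNIV. \<Sum>y\<in>UNIV. J1 \<delta> dx \<theta> X1 z y) = PX \<delta> X1"
    unfolding swap1 using R1 hA by (simp add: sum_x sum_z PYA PXgY1_def PZgY1_def PX_vals) algebra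
  have m2: "(\<Sum>z\<in>UNIV. \<Sum>y\<in>UNIV. J1 \<delta> dx \<theta> Xe z y) = PX \<delta> Xe"
    unfolding swap1 using R1 hA by (simp add: sum_x sum_z PYA PXgY1_def PZgY1_def PX_vals) algebra
  have marg: "(\<Sum>z\<in>UNIV. \<Sum>y\<in>UNIV. J1 \<delta> dx \<theta> x z y) = PX \<delta> x" for x
    using m0 m1 m2 by (cases x) auto
  have es0: "(\<Sum>x\<in>UNIV. \<Sum>z\<in>UNIV. \<Sum>y\<in>UNIV. J1 \<delta> dx \<theta> x z y * dsbar \<delta> x z) = dx/2 + \<delta>/2"
  proof -
    have "(\<Sum>x\<in>UNIV. \<Sum>z\<in>UNIV. \<Sum>y\<in>UNIV. J1 \<delta> dx \<theta> x z y * dsbar \<delta> x z)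
       = 3*(A*dx)/2 + (B*dx*(1-\<theta>)/2 + (B*dx*\<theta>/2 + B*(1-dx)*(\<theta>/2 + (1-\<theta>)/2)))"
      unfolding sum_x[of "\<lambda>x. \<Sum>z\<in>UNIV. \<Sum>y\<in>UNIV. J1 \<delta> dx \<theta> x z y * dsbar \<delta> x z"]
      unfolding swap by (simp add: sum_x sum_z PYA PXgY1_def PZgY1_def dsv)
    also have "\<dots> = 3*(A*dx)/2 + B/2" by (simp add: field_simps)
    also have "\<dots> = dx/2 + \<delta>/2" using R1 hA by algebra
    finally show ?thesis .
  qed
  have es: "(\<Sum>x\<in>UNIV. \<Sum>z\<in>UNIV. \<Sum>y\<in>UNIV. J1 \<delta> dx \<theta> x z y * dsbar \<delta> x z) \<le> ds"
    using es0 sx by simp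
  have ex0: "(\<Sum>x\<in>UNIV. \<Sum>z\<in>UNIV. \<Sum>y\<in>UNIV. J1 \<delta> dx \<theta> x z y * d_x x y) = dx"
  proof -
    have "(\<Sum>x\<in>UNIV. \<Sum>z\<in>UNIV. \<Sum>y\<in>UNIV. J1 \<delta> dx \<theta> x z y * d_x x y) = 2*(A*dx) + B*dx"
      unfolding sum_x[of "\<lambda>x. \<Sum>z\<in>UNIV. \<Sum>y\<in>UNIV. J1 \<delta> dx \<theta> x z y * d_x x y"]
      unfolding swap by (simp add: sum_x sum_z PYA PXgY1_def PZgY1_def d_x_def)
    also have "\<dots> = (2*A+B)*dx" by (simp add: algebra_simps)
    finally show ?thesis using R1 by simp
  qed
  have F: "feasible \<delta> ds dx (\<lambda>x z y. J1 \<delta> dx \<theta> x z y / PX \<delta> x)"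
    by (rule feasJ[OF d0 d1' Jnn marg es]) (simp add: ex0)
  define P where "P z y = PY1 \<delta> dx y * PZgY1 \<theta> z y" for z y
  define K where "K x (z::zsym) y = PXgY1 dx x y" for x z y
  have MI0: "mutual_info b \<delta> (\<lambda>x z y. J1 \<delta> dx \<theta> x z y / PX \<delta> x)
     = HX b \<delta> + (\<Sum>z\<in>UNIV. \<Sum>y\<in>UNIV. P z y * (\<Sum>x\<in>UNIV. plogp b (K x z y)))"
  proof (rule MI_markov[OF b d0 d1'])
    show "J1 \<delta> dx \<theta> x z y = P z y * K x z y" for x z y by (simp add: J1_def P_def K_def)
    show "P z y \<ge> 0" for z y using PYnn PZnn by (simp add: P_def)
    show "K x z y \<ge> 0" for x z y using PXnn by (simp add: K_def)
    show "P z y = 0 \<or> (\<Sum>x\<in>UNIV. K x z y) = 1" for z y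
      by (cases y) (simp_all add: K_def sum_x PXgY1_def)
    show "(\<Sum>z\<in>UNIV. \<Sum>y\<in>UNIV. J1 \<delta> dx \<theta> x z y) = PX \<delta> x" for x by (rule marg)
  qed
  define c where "c = plogp b (1-dx) + 2 * plogp b (dx/2)"
  have Kc: "(\<Sum>x\<in>UNIV. plogp b (K x z y)) = c" for z y
    by (cases y) (simp_all add: K_def sum_x PXgY1_def c_def)
  have Ps: "(\<Sum>z\<in>UNIV. \<Sum>y\<in>UNIV. P z y) = 1"
    using R1 by (simp add: sum_x sum_z P_def PYA PZgY1_def) algebra
  have S: "(\<Sum>z\<in>UNIV. \<Sum>y\<in>UNIV. P z y * (\<Sum>x\<in>UNIV. plogp b (K x z y))) = c"
    unfolding Kc using Ps by (simp add: sum_distrib_right[symmetric])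
  have T: "HX b \<delta> + c = hb b \<delta> + (1 - \<delta>) * log b 2 - hb b dx - dx * log b 2"
  proof -
    have h: "plogp b ((1/2) * dx) = (1/2) * plogp b dx + (1/2)*dx*log b (1/2)"
      by (rule plogp_mult) (use x0 in auto)
    have l: "log b (1/2) = - log b 2" using b by (simp add: log_divide)
    show ?thesis using h unfolding c_def HX_def hb_def l by (simp add: algebra_simps)
  qed
  have LB: "mutual_info b \<delta> W \<ge> hb b \<delta> + (1 - \<delta>) * log b 2 - hb b dx - dx * log b 2" if FW: "feasible \<delta> ds dx W" for W
  proof (cases "dx = 0")
    case True
    then have "feasible \<delta> ds 0 W" using FW by simp
    from LB_dx0[OF b d0 d1' this] show ?thesis using True by (simp add: HX_def hb_def plogp_def)
  next
    case False
    then have "0 < dx" using x0 by simp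
    from LB_D1pos[OF b d0 d1' FW this] show ?thesis using x1 d1 by (simp add: HX_def)
  qed
  show ?thesis by (rule finish[OF marg F _ LB]) (use MI0 S T in simp)
qed




lemma case4:
  assumes b: "b > 1" and d0: "0 < \<delta>" and d1: "\<delta> < 1/3" and D: "D4 \<delta> ds dx"
  shows "RD b \<delta> ds dx = hb b \<delta> + (1 - \<delta>) * log b 2 - H3 b (ds - \<delta>/2) (dx - ds + \<delta>/2) (1 - dx) \<and> attains b \<delta> ds dx (J4 \<delta> ds dx)"
proof -
  have d1': "\<delta> < 1" using d1 by simp
  have x0: "2*ds - \<delta> \<le> dx" and x1: "dx \<le> ds + \<delta>/2" and s0: "\<delta>/2 \<le> ds" and s1: "ds \<le> 3*\<delta>/2"
    using D by (auto simp: D4_def)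
  note dsv = dsbar_vals[OF d0 d1']
  define den where "den = \<delta> + 4*dx - 2*ds - 2"
  have denn: "den < 0" using x1 s1 d1 by (simp add: den_def)
  have den': "den \<noteq> 0" using denn by simp
  define A where "A = (\<delta>+dx-1)/den"
  define B where "B = (dx-ds-\<delta>/2)/den"
  have A0: "A \<ge> 0" using denn x1 s1 d1 unfolding A_def by (intro divide_nonpos_neg) auto
  have B0: "B \<ge> 0" using denn x1 unfolding B_def by (intro divide_nonpos_neg) auto
  have PZ: "PZY4 \<delta> ds dx z y = (if y = emb z then A else if y = Xe then B else 0)" for z y
    by (simp add: PZY4_def A_def B_def den_def)
  have hA: "A*den = \<delta>+dx-1" using den' by (simp add: A_def)
  have hB: "B*den = dx-ds-\<delta>/2" using den' by (simp add: B_def)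
  have R1: "2*A + 2*B = 1"
  proof -
    have "(2*A+2*B)*den = 2*(A*den) + 2*(B*den)" by (simp add: algebra_simps)
    also have "\<dots> = 1*den" unfolding hA hB by (simp add: den_def)
    finally show ?thesis using den' by simp
  qed
  have Knn: "PXgZY4 \<delta> ds dx x z y \<ge> 0" for x z y
    using x0 x1 s0 s1 d1 by (simp add: PXgZY4_def)
  have Jnn: "J4 \<delta> ds dx x z y \<ge> 0" for x z y
    using Knn[of x z y] A0 B0 by (simp add: J4_def PZ)
  have m0: "(\<Sum>z\<in>UNIV. \<Sum>y\<in>UNIV. J4 \<delta> ds dx X0 z y) = PX \<delta> X0"
    using R1 hA hB den_def by (simp add: sum_x sum_z J4_def PZ PXgZY4_def PX_vals) algebra
  have m1: "(\<Sum>z\<in>UNIV. \<Sum>y\<in>UNIV. J4 \<delta> ds dx X1 z y) = PX \<delta> X1"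
    using R1 hA hB den_def by (simp add: sum_x sum_z J4_def PZ PXgZY4_def PX_vals) algebra
  have m2: "(\<Sum>z\<in>UNIV. \<Sum>y\<in>UNIV. J4 \<delta> ds dx Xe z y) = PX \<delta> Xe"
    using R1 hA hB den_def by (simp add: sum_x sum_z J4_def PZ PXgZY4_def PX_vals) algebra
  have es0: "(\<Sum>x\<in>UNIV. \<Sum>z\<in>UNIV. \<Sum>y\<in>UNIV. J4 \<delta> ds dx x z y * dsbar \<delta> x z) = ds"
    using R1 hA hB den_def by (simp add: sum_x sum_z J4_def PZ PXgZY4_def dsv) algebra
  have ex0: "(\<Sum>x\<in>UNIV. \<Sum>z\<in>UNIV. \<Sum>y\<in>UNIV. J4 \<delta> ds dx x z y * d_x x y) = dx"
    using R1 hA hB den_def by (simp add: sum_x sum_z J4_def PZ PXgZY4_def d_x_def) algebra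
  have Ps: "(\<Sum>z\<in>UNIV. \<Sum>y\<in>UNIV. PZY4 \<delta> ds dx z y) = 1"
    using R1 by (simp add: sum_x sum_z PZ)
  have marg: "(\<Sum>z\<in>UNIV. \<Sum>y\<in>UNIV. J4 \<delta> ds dx x z y) = PX \<delta> x" for x
    using m0 m1 m2 by (cases x) auto
  have F: "feasible \<delta> ds dx (\<lambda>x z y. J4 \<delta> ds dx x z y / PX \<delta> x)"
    by (rule feasJ[OF d0 d1' Jnn marg]) (simp_all add: es0 ex0)
  have MI0: "mutual_info b \<delta> (\<lambda>x z y. J4 \<delta> ds dx x z y / PX \<delta> x)
     = HX b \<delta> + (\<Sum>z\<in>UNIV. \<Sum>y\<in>UNIV. PZY4 \<delta> ds dx z y * (\<Sum>x\<in>UNIV. plogp b (PXgZY4 \<delta> ds dx x z y)))"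
  proof (rule MI_markov[OF b d0 d1'])
    show "J4 \<delta> ds dx x z y = PZY4 \<delta> ds dx z y * PXgZY4 \<delta> ds dx x z y" for x z y by (simp add: J4_def)
    show "PZY4 \<delta> ds dx z y \<ge> 0" for z y using A0 B0 by (simp add: PZ)
    show "PXgZY4 \<delta> ds dx x z y \<ge> 0" for x z y by (rule Knn)
    show "PZY4 \<delta> ds dx z y = 0 \<or> (\<Sum>x\<in>UNIV. PXgZY4 \<delta> ds dx x z y) = 1" for z y
      by (cases z; cases y) (simp_all add: PZ sum_x PXgZY4_def)
    show "(\<Sum>z\<in>UNIV. \<Sum>y\<in>UNIV. J4 \<delta> ds dx x z y) = PX \<delta> x" for x by (rule marg)
  qed
  define c where "c = plogp b (ds - \<delta>/2) + plogp b (dx - ds + \<delta>/2) + plogp b (1 - dx)"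
  have Kc: "PZY4 \<delta> ds dx z y * (\<Sum>x\<in>UNIV. plogp b (PXgZY4 \<delta> ds dx x z y)) = PZY4 \<delta> ds dx z y * c" for z y
    by (cases z; cases y) (simp_all add: PZ sum_x PXgZY4_def c_def algebra_simps)
  have S: "(\<Sum>z\<in>UNIV. \<Sum>y\<in>UNIV. PZY4 \<delta> ds dx z y * (\<Sum>x\<in>UNIV. plogp b (PXgZY4 \<delta> ds dx x z y))) = c"
    unfolding Kc using Ps by (simp add: sum_distrib_right[symmetric])
  have T: "HX b \<delta> + c = hb b \<delta> + (1 - \<delta>) * log b 2 - H3 b (ds - \<delta>/2) (dx - ds + \<delta>/2) (1 - dx)"
    by (simp add: HX_def H3_def c_def)
  have LB: "mutual_info b \<delta> W \<ge> hb b \<delta> + (1 - \<delta>) * log b 2 - H3 b (ds - \<delta>/2) (dx - ds + \<delta>/2) (1 - dx)"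
    if FW: "feasible \<delta> ds dx W" for W
  proof (cases "ds - \<delta>/2 > 0")
    case True
    have "dx - ds + \<delta>/2 \<le> 1 - dx" using x1 s1 d1 by simp
    moreover have "1 - dx > 0" using x1 s1 d1 by simp
    ultimately show ?thesis using LB_D4pos[OF b d0 d1 FW True] x0 by (simp add: HX_def)
  next
    case False
    then have sd: "ds = \<delta>/2" using s0 by simp
    show ?thesis
    proof (cases "dx = 0")
      case True
      then have "feasible \<delta> ds 0 W" using FW by simp
      from LB_dx0[OF b d0 d1' this] show ?thesis using True sd by (simp add: HX_def H3_def plogp_def)
    next
      case False
      have "dx \<ge> 0" using x0 sd by simp
      then have "0 < dx" using False by simp
      moreover have "dx \<le> \<delta>" using x1 sd by simp
      ultimately show ?thesis using LB_D4zero[OF b d0 d1 FW sd] by (simp add: HX_def)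
    qed
  qed
  show ?thesis by (rule finish[OF marg F _ LB]) (use MI0 S T in simp)
qed


theorem theorem5:
  fixes b \<delta> ds dx :: real
  assumes "b > 1"
    and "0 < \<delta>" and "\<delta> < 1/3"
    and "ds \<ge> \<delta>/2" and "dx \<ge> 0"
  shows
    "(D1 \<delta> ds dx \<longrightarrow>
        RD b \<delta> ds dx = hb b \<delta> + (1 - \<delta>) * log b 2 - hb b dx - dx * log b 2 \<and>
        (\<forall>\<theta>. 0 \<le> \<theta> \<and> \<theta> \<le> 1 \<longrightarrow> attains b \<delta> ds dx (J1 \<delta> dx \<theta>))) \<and>
     (D2 \<delta> ds dx \<longrightarrow>
        RD b \<delta> ds dx = (1 - \<delta>) * (log b 2 - hb b ((dx - \<delta>) / (1 - \<delta>))) \<and>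
        attains b \<delta> ds dx (J2 \<delta> dx)) \<and>
     (D3 \<delta> ds dx \<longrightarrow>
        RD b \<delta> ds dx = (1 - \<delta>) * (log b 2 - hb b ((ds - \<delta>/2) / (1 - \<delta>))) \<and>
        attains b \<delta> ds dx (J3 \<delta> ds)) \<and>
     (D4 \<delta> ds dx \<longrightarrow>
        RD b \<delta> ds dx = hb b \<delta> + (1 - \<delta>) * log b 2
                        - H3 b (ds - \<delta>/2) (dx - ds + \<delta>/2) (1 - dx) \<and>
        attains b \<delta> ds dx (J4 \<delta> ds dx)) \<and>
     (D5 \<delta> ds dx \<longrightarrow> RD b \<delta> ds dx = 0)"
  proof -
  have c1: "RD b \<delta> ds dx = hb b \<delta> + (1 - \<delta>) * log b 2 - hb b dx - dx * log b 2 \<and> attains b \<delta> ds dx (J1 \<delta> dx \<theta>)"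
    if "D1 \<delta> ds dx" "0 \<le> \<theta>" "\<theta> \<le> 1" for \<theta>
    using case1[OF assms(1,2,3) that] .
  show ?thesis
  proof (intro conjI impI allI)
    assume D: "D1 \<delta> ds dx"
    show "RD b \<delta> ds dx = hb b \<delta> + (1 - \<delta>) * log b 2 - hb b dx - dx * log b 2" using c1[OF D, of 0] by simp
    fix \<theta> :: real assume "0 \<le> \<theta> \<and> \<theta> \<le> 1"
    then show "attains b \<delta> ds dx (J1 \<delta> dx \<theta>)" using c1[OF D] by simp
  next
    assume D: "D2 \<delta> ds dx"
    show "RD b \<delta> ds dx = (1 - \<delta>) * (log b 2 - hb b ((dx - \<delta>) / (1 - \<delta>)))" using case2[OF assms(1,2,3) D] by simp
  next
    assume D: "D2 \<delta> ds dx"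
    show "attains b \<delta> ds dx (J2 \<delta> dx)" using case2[OF assms(1,2,3) D] by simp
  next
    assume D: "D3 \<delta> ds dx"
    show "RD b \<delta> ds dx = (1 - \<delta>) * (log b 2 - hb b ((ds - \<delta>/2) / (1 - \<delta>)))" using case3[OF assms(1,2,3) D] by simp
  next
    assume D: "D3 \<delta> ds dx"
    show "attains b \<delta> ds dx (J3 \<delta> ds)" using case3[OF assms(1,2,3) D] by simp
  next
    assume D: "D4 \<delta> ds dx"
    show "RD b \<delta> ds dx = hb b \<delta> + (1 - \<delta>) * log b 2 - H3 b (ds - \<delta>/2) (dx - ds + \<delta>/2) (1 - dx)"
      using case4[OF assms(1,2,3) D] by simp
  next
    assume D: "D4 \<delta> ds dx"
    show "attains b \<delta> ds dx (J4 \<delta> ds dx)" using case4[OF assms(1,2,3) D] by simp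
  next
    assume D: "D5 \<delta> ds dx"
    show "RD b \<delta> ds dx = 0" using case5[OF assms(1,2,3) D] .
  qed
qed

end
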